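(* Let $\ell>0$, $r>0$, $\lambda>0$, and let $G$ be a probability distribution on $[0,\infty)$ with $s_1=\int s\,G(ds)$, $s_2=\int s^2\,G(ds)$. Let $W$ be the greedy polling population process on the circle $S$ of circumference $\ell$ (described in the context). Assume $\lambda s_1<1$ and $s_2<\infty$, and let $0<a\le\min(\ell/2,2r)$. Then there exist $\alpha>0$, $b>0$ and an integer $n$ such that $v(\zeta)=\|\zeta\|_a$ satisfies $\mathbb{E}_\zeta v(W_1)-v(\zeta)\le-\alpha$ for all $\zeta\in M_+(S)$ with $\|\zeta\|>n$, and $\mathbb{E}_\zeta v(W_1)-v(\zeta)\le b$ for all $\zeta\in M_+(S)$ with $\|\zeta\|\le n$.
   Context: $d$ is the shortest-arc distance and $m$ the uniform probability distribution on $S$; $B_\rho(x)=\{y: d(x,y)<\rho\}$. $M_+(S)$ is the set of finite counting measures on $S$; $\|\zeta\|=\zeta(S)$; $x\in\zeta$ means $\zeta(\{x\})>0$; $\Gamma_\zeta(x)=\{y: d(x,y)<d(x',y)\ \forall x'\in\zeta,\ x'\ne x\}$. $\|\zeta\|_a=\sqrt{\int\int(a-d(x,y))_+\,\zeta(dx)\,\zeta(dy)}$. $W$ is the Markov chain on $M_+(S)$ with the following transition from $W_t=\zeta$: add $N$ customers at i.i.d. $m$-distributed locations, $P(N=n)=\int e^{-\lambda s}\frac{(\lambda s)^n}{n!}G(ds)$, giving $\zeta'$; then choose $U$ uniform on $S$; if $\zeta'(B_r(U))=0$ nothing changes, otherwise one customer at the atom of $\zeta'$ nearest to $U$ is removed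 (equivalently, for each $x\in\zeta'$ one customer at $x$ is removed with probability $m(B_r(x)\cap\Gamma_{\zeta'}(x))$). $\mathbb{E}_\zeta$ is expectation given $W_0=\zeta$. *)

theory Defs
  imports "HOL-Probability.Probability" "HOL-Library.Multiset"
begin

text \<open>The circle S of circumference l is represented by the half-open interval [0,l).\<close>

definition circ :: "real \<Rightarrow> real set" where
  "circ l = {0..<l}"

definition circ_dist :: "real \<Rightarrow> real \<Rightarrow> real \<Rightarrow> real" where
  "circ_dist l x y = min \<bar>x - y\<bar> (l - \<bar>x - y\<bar>)"

definition unif :: "real \<Rightarrow> real measure" where
  "unif l = uniform_measure lborel {0..<l}"

text \<open>Finite counting measures on S, represented as finite multisets of points of S.\<close>
definition count_meas :: "real \<Rightarrow> real multiset set" where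
  "count_meas l = {\<zeta>. set_mset \<zeta> \<subseteq> circ l}"

definition a_norm :: "real \<Rightarrow> real \<Rightarrow> real multiset \<Rightarrow> real" where
  "a_norm l a \<zeta> =
     sqrt (sum_mset (image_mset (\<lambda>x. sum_mset (image_mset (\<lambda>y. max 0 (a - circ_dist l x y)) \<zeta>)) \<zeta>))"

definition rball :: "real \<Rightarrow> real \<Rightarrow> real \<Rightarrow> real set" where
  "rball l \<rho> x = {y \<in> circ l. circ_dist l x y < \<rho>}"

definition voronoi :: "real \<Rightarrow> real multiset \<Rightarrow> real \<Rightarrow> real set" where
  "voronoi l \<zeta> x = {y \<in> circ l. \<forall>x'\<in>#\<zeta>. x' \<noteq> x \<longrightarrow> circ_dist l x y < circ_dist l x' y}"

text \<open>Probability that one customer at atom x of zeta is served: m(B_r(x) \<inter> Gamma_zeta(x)).\<close>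
definition serve_prob :: "real \<Rightarrow> real \<Rightarrow> real multiset \<Rightarrow> real \<Rightarrow> real" where
  "serve_prob l r \<zeta> x = measure (unif l) (rball l r x \<inter> voronoi l \<zeta> x)"

definition serve_exp :: "real \<Rightarrow> real \<Rightarrow> (real multiset \<Rightarrow> real) \<Rightarrow> real multiset \<Rightarrow> real" where
  "serve_exp l r f \<zeta> =
     (\<Sum>x\<in>set_mset \<zeta>. serve_prob l r \<zeta> x * f (\<zeta> - {#x#}))
     + (1 - (\<Sum>x\<in>set_mset \<zeta>. serve_prob l r \<zeta> x)) * f \<zeta>"

definition arrival_prob :: "real \<Rightarrow> real measure \<Rightarrow> nat \<Rightarrow> ennreal" where
  "arrival_prob lam G n = (\<integral>\<^sup>+ s. ennreal (exp (- lam * s) * (lam * s) ^ n / fact n) \<partial>G)"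

text \<open>E_zeta f(W_1) for nonnegative f (as an extended nonnegative real):
  add N i.i.d. uniform customers, then perform the service step.\<close>
definition step_exp :: "real \<Rightarrow> real \<Rightarrow> real \<Rightarrow> real measure \<Rightarrow> (real multiset \<Rightarrow> real)
    \<Rightarrow> real multiset \<Rightarrow> ennreal" where
  "step_exp l r lam G f \<zeta> =
     (\<Sum>n. arrival_prob lam G n *
        (\<integral>\<^sup>+ y. ennreal (serve_exp l r f (\<zeta> + mset (map y [0..<n])))
           \<partial>(PiM {..<n} (\<lambda>_. unif l))))"

end

theory Submission
  imports Defs
begin

definition fwd :: "real \<Rightarrow> real \<Rightarrow> real \<Rightarrow> real" where
  "fwd l x u = (if x \<le> u then u - x else u - x + l)"

definition Kf :: "real \<Rightarrow> real \<Rightarrow> real \<Rightarrow> real \<Rightarrow> real" where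
  "Kf l a x y = max 0 (a - circ_dist l x y)"

lemma cd_fwd:
  assumes "0 \<le> x" "x < l" "0 \<le> u" "u < l"
  shows "circ_dist l x u = min (fwd l x u) (fwd l u x)"
  using assms unfolding circ_dist_def fwd_def by (auto simp: abs_if min_def)

lemma cd_sym: "circ_dist l x u = circ_dist l u x"
  unfolding circ_dist_def by (simp add: abs_minus_commute)

lemma cd_nonneg: "0 \<le> x \<Longrightarrow> x < l \<Longrightarrow> 0 \<le> u \<Longrightarrow> u < l \<Longrightarrow> 0 \<le> circ_dist l x u"
  unfolding circ_dist_def by (auto simp: abs_if)

lemma cd_triangle:
  assumes "0 \<le> x" "x < l" "0 \<le> u" "u < l" "0 \<le> z" "z < l"
  shows "circ_dist l x z \<le> circ_dist l x u + circ_dist l u z"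
  using assms unfolding circ_dist_def by (auto simp: abs_if min_def)

lemma arc_dist:
  assumes "0 \<le> w" "w < l" "0 \<le> u" "u < l" "0 \<le> z" "z < l" "0 \<le> w'" "w' < l"
    and "fwd l w u < g" "g \<le> l"
    and "z = w \<or> g \<le> fwd l w z"
    and "(w' = w \<and> g = l) \<or> (w' \<noteq> w \<and> fwd l w w' = g)"
  shows "circ_dist l u z \<ge> min (fwd l w u + circ_dist l w z) ((g - fwd l w u) + circ_dist l w' z)"
  using assms unfolding circ_dist_def fwd_def 
  by (auto simp: abs_if min_def split: if_splits)

lemma lborel_shift:
  fixes h :: "real \<Rightarrow> ennreal"
  assumes [measurable]: "h \<in> borel_measurable borel"
  shows "(\<integral>\<^sup>+t. h (c + t) \<partial>lborel) = (\<integral>\<^sup>+t. h t \<partial>lborel)"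
proof -
  have "(\<integral>\<^sup>+t. h t \<partial>lborel) = (\<integral>\<^sup>+t. h t \<partial>(distr lborel borel ((+) c)))"
    by (simp add: lborel_distr_plus)
  also have "\<dots> = (\<integral>\<^sup>+t. h (c + t) \<partial>lborel)"
    by (subst nn_integral_distr) auto
  finally show ?thesis by simp
qed

lemma trans_int:
  fixes f :: "real \<Rightarrow> ennreal"
  assumes "0 \<le> x" "x < l" and [measurable]: "f \<in> borel_measurable borel"
  shows "(\<integral>\<^sup>+u. indicator {0..<l} u * f (fwd l x u) \<partial>lborel) = (\<integral>\<^sup>+t. indicator {0..<l} t * f t \<partial>lborel)"
proof -
  have "(\<integral>\<^sup>+u. indicator {0..<l} u * f (fwd l x u) \<partial>lborel) =
     (\<integral>\<^sup>+u. indicator {x..<l} u * f (u - x) + indicator {0..<x} u * f (u - x + l) \<partial>lborel)"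
    using assms(1,2) by (intro nn_integral_cong) (auto simp: fwd_def indicator_def)
  also have "\<dots> = (\<integral>\<^sup>+u. indicator {x..<l} u * f (u - x) \<partial>lborel) + (\<integral>\<^sup>+u. indicator {0..<x} u * f (u - x + l) \<partial>lborel)"
    by (rule nn_integral_add) auto
  also have "(\<integral>\<^sup>+u. indicator {x..<l} u * f (u - x) \<partial>lborel) = (\<integral>\<^sup>+t. indicator {x..<l} (x + t) * f (x + t - x) \<partial>lborel)"
    by (rule lborel_shift[symmetric, of "\<lambda>u. indicator {x..<l} u * f (u - x)" x]) auto
  also have "\<dots> = (\<integral>\<^sup>+t. indicator {0..<l-x} t * f t \<partial>lborel)"
    by (intro nn_integral_cong) (auto simp: indicator_def)
  also have "(\<integral>\<^sup>+u. indicator {0..<x} u * f (u - x + l) \<partial>lborel) = (\<integral>\<^sup>+t. indicator {0..<x} ((x - l) + t) * f ((x - l) + t - x + l) \<partial>lborel)"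
    by (rule lborel_shift[symmetric, of "\<lambda>u. indicator {0..<x} u * f (u - x + l)" "x - l"]) auto
  also have "\<dots> = (\<integral>\<^sup>+t. indicator {l-x..<l} t * f t \<partial>lborel)"
    by (intro nn_integral_cong) (auto simp: indicator_def)
  also have "(\<integral>\<^sup>+t. indicator {0..<l-x} t * f t \<partial>lborel) + (\<integral>\<^sup>+t. indicator {l-x..<l} t * f t \<partial>lborel)
      = (\<integral>\<^sup>+t. indicator {0..<l-x} t * f t + indicator {l-x..<l} t * f t \<partial>lborel)"
    by (rule nn_integral_add[symmetric]) auto
  also have "\<dots> = (\<integral>\<^sup>+t. indicator {0..<l} t * f t \<partial>lborel)"
    using assms(1,2) by (intro nn_integral_cong) (auto simp: indicator_def)
  finally show ?thesis .
qed

lemma fwd_range: "0 \<le> x \<Longrightarrow> x < l \<Longrightarrow> 0 \<le> u \<Longrightarrow> u < l \<Longrightarrow> 0 \<le> fwd l x u \<and> fwd l x u < l"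
  unfolding fwd_def by auto

lemma K_arc_max:
  assumes "0 \<le> w" "w < l" "0 \<le> u" "u < l" "0 \<le> z" "z < l" "0 \<le> w'" "w' < l"
    and "fwd l w u < g" "g \<le> l"
    and "z = w \<or> g \<le> fwd l w z"
    and "(w' = w \<and> g = l) \<or> (w' \<noteq> w \<and> fwd l w w' = g)"
  shows "Kf l a u z \<le> max (max 0 (Kf l a w z - fwd l w u)) (max 0 (Kf l a w' z - (g - fwd l w u)))"
  using arc_dist[OF assms] unfolding Kf_def by (auto simp: min_def max_def split: if_splits)

lemma K_lip:
  assumes "0 \<le> w" "w < l" "0 \<le> z" "z < l" "0 \<le> w'" "w' < l"
  shows "\<bar>Kf l a w z - Kf l a w' z\<bar> \<le> circ_dist l w w'"
proof -
  have "circ_dist l w z \<le> circ_dist l w w' + circ_dist l w' z" by (rule cd_triangle) (use assms in auto)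
  moreover have "circ_dist l w' z \<le> circ_dist l w' w + circ_dist l w z" by (rule cd_triangle) (use assms in auto)
  ultimately show ?thesis unfolding Kf_def using cd_sym[of l w w'] by (auto simp: max_def)
qed

lemma cd_le_fwd: "0 \<le> x \<Longrightarrow> x < l \<Longrightarrow> 0 \<le> u \<Longrightarrow> u < l \<Longrightarrow> circ_dist l x u \<le> fwd l x u"
  using cd_fwd by force

lemma chord_bound:
  fixes K1 K2 g t :: real
  assumes "0 \<le> K1" "0 \<le> K2" "\<bar>K1 - K2\<bar> \<le> g" "0 \<le> t" "t \<le> g" "0 < g"
  shows "max (max 0 (K1 - t)) (max 0 (K2 - (g - t))) \<le> K1 + (K2 - K1) * t / g"
proof -
  have eq: "K1 + (K2 - K1) * t / g = (K1 * (g - t) + K2 * t) / g"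
    using assms(6) by (simp add: field_simps)
  have n1: "0 \<le> K1 * (g - t)" using assms by simp
  have n2: "0 \<le> K2 * t" using assms by simp
  have c0: "0 \<le> K1 + (K2 - K1) * t / g" unfolding eq using n1 n2 assms(6) by simp
  have "(K1 - t) * g \<le> K1 * (g - t) + K2 * t"
  proof -
    have "- t * g \<le> (K2 - K1) * t"
    proof -
      have "- g \<le> K2 - K1" using assms(3) by linarith
      from mult_right_mono[OF this assms(4)] show ?thesis by (simp add: mult.commute)
    qed
    then show ?thesis by (simp add: algebra_simps)
  qed
  then have c1: "K1 - t \<le> K1 + (K2 - K1) * t / g" unfolding eq using assms(6) by (simp add: le_divide_eq)
  have "(K2 - (g - t)) * g \<le> K1 * (g - t) + K2 * t"
  proof -
    have "K2 - K1 \<le> g" using assms(3) by linarith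
    from mult_right_mono[OF this, of "g - t"] assms(5)
    have "(K2 - K1) * (g - t) \<le> g * (g - t)" by simp
    then show ?thesis by (simp add: algebra_simps)
  qed
  then have c2: "K2 - (g - t) \<le> K1 + (K2 - K1) * t / g" unfolding eq using assms(6) by (simp add: le_divide_eq)
  show ?thesis using c0 c1 c2 by (metis max.bounded_iff)
qed

lemma hat_bound:
  fixes K a t :: real
  assumes "0 \<le> K" "K \<le> a" "0 \<le> t" "0 < a"
  shows "max 0 (K - t) \<le> K * max 0 (1 - t / a)"
proof (cases "t \<le> a")
  case True
  have "K * t \<le> a * t" using assms by (intro mult_right_mono) auto
  then have "K * t / a \<le> t" using assms by (simp add: divide_le_eq mult.commute)
  then have "K - t \<le> K * (1 - t / a)" by (simp add: algebra_simps)
  moreover have "0 \<le> K * max 0 (1 - t / a)" using assms by simp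
  ultimately show ?thesis using True assms by (auto simp: max_def)
next
  case False
  then show ?thesis using assms by (auto simp: max_def)
qed

definition gap :: "real \<Rightarrow> real set \<Rightarrow> real \<Rightarrow> real" where
  "gap l A x = (if A - {x} = {} then l else Min (fwd l x ` (A - {x})))"

definition succ :: "real \<Rightarrow> real set \<Rightarrow> real \<Rightarrow> real" where
  "succ l A x = (if A - {x} = {} then x else (SOME w. w \<in> A - {x} \<and> fwd l x w = gap l A x))"

lemma fwd_pos: "0 \<le> x \<Longrightarrow> x < l \<Longrightarrow> 0 \<le> u \<Longrightarrow> u < l \<Longrightarrow> x \<noteq> u \<Longrightarrow> 0 < fwd l x u"
  unfolding fwd_def by auto

lemma gap_props:
  assumes A: "finite A" "A \<subseteq> {0..<l}" and x: "x \<in> A"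
  shows "0 < gap l A x" "gap l A x \<le> l" "\<And>w. w \<in> A \<Longrightarrow> w \<noteq> x \<Longrightarrow> gap l A x \<le> fwd l x w"
    "succ l A x \<in> A"
    "(succ l A x = x \<and> gap l A x = l) \<or> (succ l A x \<noteq> x \<and> fwd l x (succ l A x) = gap l A x)"
proof -
  have l: "0 < l" using A x by force
  show "0 < gap l A x"
  proof (cases "A - {x} = {}")
    case True then show ?thesis using l by (simp add: gap_def)
  next
    case False
    have "\<forall>w\<in>A - {x}. 0 < fwd l x w" using A x by (auto intro!: fwd_pos)
    then show ?thesis using False A by (simp add: gap_def)
  qed
  show "gap l A x \<le> l"
  proof (cases "A - {x} = {}")
    case True then show ?thesis by (simp add: gap_def)
  next
    case False
    then obtain w where "w \<in> A - {x}" by auto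
    then have "Min (fwd l x ` (A - {x})) \<le> fwd l x w" using A by (intro Min_le) auto
    moreover have "fwd l x w < l" using fwd_range[of x l w] A x \<open>w \<in> A - {x}\<close> by (auto simp: subset_eq)
    ultimately show ?thesis using False by (simp add: gap_def)
  qed
  show "\<And>w. w \<in> A \<Longrightarrow> w \<noteq> x \<Longrightarrow> gap l A x \<le> fwd l x w"
  proof -
    fix w assume "w \<in> A" "w \<noteq> x"
    then have "A - {x} \<noteq> {}" by auto
    then show "gap l A x \<le> fwd l x w" using \<open>w \<in> A\<close> \<open>w \<noteq> x\<close> A by (simp add: gap_def)
  qed
  have "succ l A x \<in> A \<and> ((succ l A x = x \<and> gap l A x = l) \<or> (succ l A x \<noteq> x \<and> fwd l x (succ l A x) = gap l A x))"
  proof (cases "A - {x} = {}")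
    case True then show ?thesis using x by (simp add: gap_def succ_def)
  next
    case False
    have "Min (fwd l x ` (A - {x})) \<in> fwd l x ` (A - {x})" using False A by (intro Min_in) auto
    then have ex: "\<exists>w. w \<in> A - {x} \<and> fwd l x w = gap l A x" using False by (auto simp: gap_def)
    have "(SOME w. w \<in> A - {x} \<and> fwd l x w = gap l A x) \<in> A - {x} \<and> fwd l x (SOME w. w \<in> A - {x} \<and> fwd l x w = gap l A x) = gap l A x"
      by (rule someI_ex[OF ex])
    then show ?thesis using False by (simp add: succ_def)
  qed
  then show "succ l A x \<in> A" "(succ l A x = x \<and> gap l A x = l) \<or> (succ l A x \<noteq> x \<and> fwd l x (succ l A x) = gap l A x)"
    by auto
qed

definition arcS :: "real \<Rightarrow> real set \<Rightarrow> real \<Rightarrow> real set" where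
  "arcS l A w = {u \<in> {0..<l}. fwd l w u < gap l A w}"

lemma arc_disj_aux:
  assumes "0 \<le> w1" "w1 < l" "0 \<le> w2" "w2 < l" "0 \<le> u" "u < l" "w1 \<noteq> w2"
    "fwd l w1 u < fwd l w1 w2" "fwd l w2 u < fwd l w2 w1"
  shows False
  using assms unfolding fwd_def by (auto split: if_splits)

lemma arc_disj:
  assumes A: "finite A" "A \<subseteq> {0..<l}" and "w1 \<in> A" "w2 \<in> A" "w1 \<noteq> w2"
  shows "arcS l A w1 \<inter> arcS l A w2 = {}"
proof (rule ccontr)
  assume "arcS l A w1 \<inter> arcS l A w2 \<noteq> {}"
  then obtain u where u: "u \<in> arcS l A w1" "u \<in> arcS l A w2" by auto
  have "fwd l w1 u < fwd l w1 w2" using u(1) gap_props(3)[OF A assms(3) assms(4)] assms(5)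
    by (auto simp: arcS_def)
  moreover have "fwd l w2 u < fwd l w2 w1" using u(2) gap_props(3)[OF A assms(4) assms(3)] assms(5)
    by (auto simp: arcS_def)
  moreover have "0 \<le> w1" "w1 < l" "0 \<le> w2" "w2 < l" using assms by (auto simp: subset_eq)
  ultimately show False using arc_disj_aux[of w1 l w2 u] assms u by (auto simp: arcS_def)
qed

lemma arc_cover_aux:
  assumes "0 \<le> w" "w < l" "0 \<le> w2" "w2 < l" "0 \<le> u" "u < l" "w \<noteq> w2"
    "fwd l w w2 \<le> fwd l w u"
  shows "fwd l w2 u < fwd l w u"
  using assms unfolding fwd_def by (auto split: if_splits)

lemma arc_cover:
  assumes A: "finite A" "A \<subseteq> {0..<l}" "A \<noteq> {}" and u: "0 \<le> u" "u < l"
  shows "\<exists>w\<in>A. u \<in> arcS l A w"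
proof -
  obtain w where w: "w \<in> A" "\<And>w'. w' \<in> A \<Longrightarrow> fwd l w u \<le> fwd l w' u"
  proof -
    have "Min ((\<lambda>w. fwd l w u) ` A) \<in> (\<lambda>w. fwd l w u) ` A" using A by (intro Min_in) auto
    then obtain w where "w \<in> A" "fwd l w u = Min ((\<lambda>w. fwd l w u) ` A)" by auto
    then show ?thesis using A by (intro that[of w]) auto
  qed
  have "fwd l w u < gap l A w"
  proof (cases "A - {w} = {}")
    case True
    then show ?thesis using fwd_range[of w l u] w A u by (auto simp: gap_def)
  next
    case False
    have "\<forall>w2\<in>A - {w}. fwd l w u < fwd l w w2"
    proof
      fix w2 assume w2: "w2 \<in> A - {w}"
      show "fwd l w u < fwd l w w2"
      proof (rule ccontr)
        assume "\<not> ?thesis"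
        moreover have "0 \<le> w" "w < l" "0 \<le> w2" "w2 < l" using w2 w A by (auto simp: subset_eq)
        ultimately have "fwd l w2 u < fwd l w u" using arc_cover_aux[of w l w2 u] w2 u by auto
        with w(2)[of w2] w2 show False by auto
      qed
    qed
    then show ?thesis using False A by (simp add: gap_def)
  qed
  then show ?thesis using w u by (auto simp: arcS_def)
qed

lemma arc_partition:
  assumes A: "finite A" "A \<subseteq> {0..<l}" "A \<noteq> {}"
  shows "(\<Sum>w\<in>A. indicator (arcS l A w) u) = (indicator {0..<l} u :: ennreal)"
proof (cases "u \<in> {0..<l}")
  case True
  then obtain w where w: "w \<in> A" "u \<in> arcS l A w" using arc_cover[OF A] by auto
  have "(\<Sum>w\<in>A. indicator (arcS l A w) u :: ennreal) = (\<Sum>w'\<in>A. if w' = w then 1 else 0)"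
  proof (rule sum.cong)
    fix w' assume "w' \<in> A"
    show "indicator (arcS l A w') u = (if w' = w then 1 else (0::ennreal))"
      using arc_disj[OF A(1,2) \<open>w' \<in> A\<close> w(1)] w by (auto simp: indicator_def)
  qed simp
  also have "\<dots> = 1" using w A by simp
  finally show ?thesis using True by simp
next
  case False
  then show ?thesis by (auto simp: arcS_def indicator_def)
qed

lemma R_aux:
  assumes "0 \<le> w" "w < l" "0 \<le> u" "u < l" "0 \<le> x" "x < l" "x \<noteq> w"
    "0 < fwd l w u" "2 * fwd l w u < g" "g \<le> fwd l w x"
  shows "fwd l w u < fwd l x u" "fwd l w u < fwd l u x"
  using assms unfolding fwd_def by (auto split: if_splits)

lemma L_aux:
  assumes "0 \<le> w" "w < l" "0 \<le> u" "u < l" "0 \<le> x" "x < l" "0 \<le> w'" "w' < l"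
    "(w' = w \<and> g = l) \<or> (w' \<noteq> w \<and> fwd l w w' = g)"
    "l - h < fwd l w' u" "2 * h \<le> g" "g \<le> l" "x \<noteq> w'" "x = w \<or> g \<le> fwd l w x"
  shows "fwd l u w' < fwd l x u" "fwd l u w' < fwd l u x" "fwd l u w' < h"
    "fwd l w u < g" "0 < fwd l u w'"
  using assms unfolding fwd_def by (auto split: if_splits)

lemma L_aux2:
  assumes "0 \<le> w" "w < l" "0 \<le> u" "u < l" "0 \<le> w'" "w' < l"
    "(w' = w \<and> g = l) \<or> (w' \<noteq> w \<and> fwd l w w' = g)"
    "l - h < fwd l w' u" "2 * h \<le> g" "g \<le> l"
  shows "fwd l u w' < h" "fwd l w u < g" "0 < fwd l u w'"
  using assms unfolding fwd_def by (auto split: if_splits)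

lemma RL_disj_aux:
  assumes "0 \<le> w" "w < l" "0 \<le> u" "u < l" "0 \<le> w'" "w' < l"
    "(w' = w \<and> g = l) \<or> (w' \<noteq> w \<and> fwd l w w' = g)"
    "l - h < fwd l w' u" "2 * h \<le> g" "g \<le> l" "fwd l w u < h"
  shows False
  using assms unfolding fwd_def by (auto split: if_splits)

definition hh :: "real \<Rightarrow> real \<Rightarrow> real set \<Rightarrow> real \<Rightarrow> real" where
  "hh l r A w = min r (gap l A w / 2)"
definition Rset :: "real \<Rightarrow> real \<Rightarrow> real set \<Rightarrow> real \<Rightarrow> real set" where
  "Rset l r A w = {u \<in> {0..<l}. 0 < fwd l w u \<and> fwd l w u < hh l r A w}"
definition Lset :: "real \<Rightarrow> real \<Rightarrow> real set \<Rightarrow> real \<Rightarrow> real set" where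
  "Lset l r A w = {u \<in> {0..<l}. l - hh l r A w < fwd l (succ l A w) u}"
definition cell :: "real \<Rightarrow> real \<Rightarrow> real multiset \<Rightarrow> real \<Rightarrow> real set" where
  "cell l r \<eta> x = rball l r x \<inter> voronoi l \<eta> x"

lemma fwd_meas[measurable]: "fwd l w \<in> borel_measurable borel"
  unfolding fwd_def by measurable

lemma cd_meas[measurable]: "(\<lambda>u. circ_dist l x u) \<in> borel_measurable borel"
  unfolding circ_dist_def by measurable

lemma cd_meas2[measurable]: "(\<lambda>u. circ_dist l u x) \<in> borel_measurable borel"
  unfolding circ_dist_def by measurable

lemma Kf_meas[measurable]: "(\<lambda>u. Kf l a u z) \<in> borel_measurable borel"
  unfolding Kf_def by measurable

lemma sets_Rset[measurable]: "Rset l r A w \<in> sets borel"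
  unfolding Rset_def by measurable
lemma sets_Lset[measurable]: "Lset l r A w \<in> sets borel"
  unfolding Lset_def by measurable
lemma sets_arcS[measurable]: "arcS l A w \<in> sets borel"
  unfolding arcS_def by measurable
lemma sets_cell[measurable]: "cell l r \<eta> x \<in> sets borel"
proof -
  have "voronoi l \<eta> x = {0..<l} \<inter> (\<Inter>x'\<in>set_mset \<eta> - {x}. {y. circ_dist l x y < circ_dist l x' y})"
    by (auto simp: voronoi_def circ_def)
  moreover have "rball l r x = {0..<l} \<inter> {y. circ_dist l x y < r}" by (auto simp: rball_def circ_def)
  moreover have "{y. circ_dist l x y < circ_dist l x' y} \<in> sets borel" for x' by measurable
  moreover have "{y. circ_dist l x y < r} \<in> sets borel" by measurable
  ultimately show ?thesis unfolding cell_def by auto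
qed

context
  fixes l r :: real and \<eta> :: "real multiset" and A
  assumes A: "A = set_mset \<eta>" "A \<subseteq> {0..<l}"
begin

lemma fA: "finite A" using A by simp

lemma inA: "x \<in> A \<Longrightarrow> 0 \<le> x \<and> x < l" using A by auto

lemma hh_props: "w \<in> A \<Longrightarrow> 2 * hh l r A w \<le> gap l A w \<and> hh l r A w \<le> r"
  by (auto simp: hh_def)

lemma Rset_cell: assumes w: "w \<in> A" shows "Rset l r A w \<subseteq> cell l r \<eta> w"
proof
  fix u assume u: "u \<in> Rset l r A w"
  have u0: "0 \<le> u" "u < l" using u by (auto simp: Rset_def)
  have t: "0 < fwd l w u" "fwd l w u < hh l r A w" using u by (auto simp: Rset_def)
  have cw: "circ_dist l w u \<le> fwd l w u" using cd_le_fwd[of w l u] inA[OF w] u0 by auto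
  have "circ_dist l w u < r" using cw t hh_props[OF w] by auto
  moreover have "circ_dist l w u < circ_dist l x' u" if "x' \<in># \<eta>" "x' \<noteq> w" for x'
  proof -
    have x': "x' \<in> A" using that A by auto
    have "fwd l w u < fwd l x' u" "fwd l w u < fwd l u x'"
      using R_aux[of w l u x' "gap l A w"] inA[OF w] inA[OF x'] u0 t hh_props[OF w]
        gap_props(3)[OF fA A(2) w x'] that(2) by auto
    then show ?thesis using cw cd_fwd[of x' l u] inA[OF x'] u0 by auto
  qed
  ultimately show "u \<in> cell l r \<eta> w" using u0 by (auto simp: cell_def rball_def voronoi_def circ_def)
qed

lemma Lset_cell: assumes w: "w \<in> A" shows "Lset l r A w \<subseteq> cell l r \<eta> (succ l A w)"
proof
  fix u assume u: "u \<in> Lset l r A w"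
  define w' where "w' = succ l A w"
  have w': "w' \<in> A" using gap_props(4)[OF fA A(2) w] by (simp add: w'_def)
  have u0: "0 \<le> u" "u < l" using u by (auto simp: Lset_def)
  have t: "l - hh l r A w < fwd l w' u" using u by (auto simp: Lset_def w'_def)
  have st: "(w' = w \<and> gap l A w = l) \<or> (w' \<noteq> w \<and> fwd l w w' = gap l A w)"
    using gap_props(5)[OF fA A(2) w] by (simp add: w'_def)
  have gl: "gap l A w \<le> l" using gap_props(2)[OF fA A(2) w] .
  have L1: "fwd l u w' < hh l r A w"
    using L_aux2(1)[of w l u w' "gap l A w" "hh l r A w"] inA[OF w] inA[OF w'] u0 st t hh_props[OF w] gl
    by auto
  have cw: "circ_dist l w' u \<le> fwd l u w'" using cd_fwd[of w' l u] inA[OF w'] u0 by auto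
  have "circ_dist l w' u < r" using cw L1 hh_props[OF w] by auto
  moreover have "circ_dist l w' u < circ_dist l x' u" if "x' \<in># \<eta>" "x' \<noteq> w'" for x'
  proof -
    have x': "x' \<in> A" using that A by auto
    have "x' = w \<or> gap l A w \<le> fwd l w x'" using gap_props(3)[OF fA A(2) w x'] by auto
    then have "fwd l u w' < fwd l x' u" "fwd l u w' < fwd l u x'"
      using L_aux(1,2)[of w l u x' w' "gap l A w" "hh l r A w"] inA[OF w] inA[OF w'] inA[OF x'] u0 st t
        hh_props[OF w] gl that(2) by auto
    then show ?thesis using cw cd_fwd[of x' l u] inA[OF x'] u0 by auto
  qed
  ultimately show "u \<in> cell l r \<eta> (succ l A w)" using u0
    by (auto simp: cell_def rball_def voronoi_def circ_def w'_def)
qed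

lemma Rset_arc: assumes w: "w \<in> A" shows "Rset l r A w \<subseteq> arcS l A w"
  using hh_props[OF w] gap_props(1)[OF fA A(2) w] by (auto simp: Rset_def arcS_def)

lemma Lset_arc: assumes w: "w \<in> A" shows "Lset l r A w \<subseteq> arcS l A w"
proof
  fix u assume u: "u \<in> Lset l r A w"
  define w' where "w' = succ l A w"
  have w': "w' \<in> A" using gap_props(4)[OF fA A(2) w] by (simp add: w'_def)
  have u0: "0 \<le> u" "u < l" using u by (auto simp: Lset_def)
  have t: "l - hh l r A w < fwd l w' u" using u by (auto simp: Lset_def w'_def)
  have st: "(w' = w \<and> gap l A w = l) \<or> (w' \<noteq> w \<and> fwd l w w' = gap l A w)"
    using gap_props(5)[OF fA A(2) w] by (simp add: w'_def)
  have gl: "gap l A w \<le> l" using gap_props(2)[OF fA A(2) w] .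
  have "fwd l w u < gap l A w"
    using L_aux2(2)[of w l u w' "gap l A w" "hh l r A w"] inA[OF w] inA[OF w'] u0 st t hh_props[OF w] gl
    by auto
  then show "u \<in> arcS l A w" using u0 by (auto simp: arcS_def)
qed

lemma RL_disj: assumes w: "w \<in> A" shows "Rset l r A w \<inter> Lset l r A w = {}"
proof (rule ccontr)
  assume "Rset l r A w \<inter> Lset l r A w \<noteq> {}"
  then obtain u where u: "u \<in> Rset l r A w" "u \<in> Lset l r A w" by blast
  define w' where "w' = succ l A w"
  have w': "w' \<in> A" using gap_props(4)[OF fA A(2) w] by (simp add: w'_def)
  have u0: "0 \<le> u" "u < l" using u by (auto simp: Lset_def)
  have t: "l - hh l r A w < fwd l w' u" using u by (auto simp: Lset_def w'_def)
  have st: "(w' = w \<and> gap l A w = l) \<or> (w' \<noteq> w \<and> fwd l w w' = gap l A w)"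
    using gap_props(5)[OF fA A(2) w] by (simp add: w'_def)
  have gl: "gap l A w \<le> l" using gap_props(2)[OF fA A(2) w] .
  show False
    using RL_disj_aux[of w l u w' "gap l A w" "hh l r A w"] inA[OF w] inA[OF w'] u0 st t hh_props[OF w] gl u(1)
    by (auto simp: Rset_def)
qed

lemma cell_disj: assumes "x \<in> A" "y \<in> A" "x \<noteq> y" shows "cell l r \<eta> x \<inter> cell l r \<eta> y = {}"
  using assms A by (fastforce simp: cell_def voronoi_def)

lemma cell_sub: "cell l r \<eta> x \<subseteq> {0..<l}"
  by (auto simp: cell_def rball_def circ_def)



end

lemma affine_int:
  fixes a0 b c d :: real
  assumes "a0 \<le> b"
  shows "((\<lambda>t. c + d * t) has_integral (c * (b - a0) + d * ((b\<^sup>2 - a0\<^sup>2) / 2))) {a0..b}"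
proof -
  have "((\<lambda>t. c) has_integral (c * (b - a0))) {a0..b}"
    using has_integral_const_real[of c a0 b] assms by (simp add: mult.commute)
  moreover have "((\<lambda>t. t * d) has_integral ((b\<^sup>2 - a0\<^sup>2) / 2 * d)) {a0..b}"
    by (rule has_integral_mult_left[OF ident_has_integral[OF assms]])
  ultimately have "((\<lambda>t. c + t * d) has_integral (c * (b - a0) + (b\<^sup>2 - a0\<^sup>2) / 2 * d)) {a0..b}"
    by (rule has_integral_add)
  then show ?thesis by (simp add: mult.commute)
qed

lemma emeasure_fwd_set:
  assumes "0 \<le> x" "x < l" and [measurable]: "B \<in> sets borel"
  shows "emeasure lborel {u \<in> {0..<l}. fwd l x u \<in> B} = emeasure lborel ({0..<l} \<inter> B)"
proof -
  have S0: "{u \<in> {0..<l}. fwd l x u \<in> B} = {0..<l} \<inter> fwd l x -` B" by auto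
  have S: "{u \<in> {0..<l}. fwd l x u \<in> B} \<in> sets lborel" unfolding S0 sets_lborel
    using measurable_sets_borel[OF fwd_meas assms(3)] by auto
  have "emeasure lborel {u \<in> {0..<l}. fwd l x u \<in> B} = (\<integral>\<^sup>+u. indicator {u \<in> {0..<l}. fwd l x u \<in> B} u \<partial>lborel)"
    by (rule nn_integral_indicator[symmetric, OF S])
  also have "\<dots> = (\<integral>\<^sup>+u. indicator {0..<l} u * indicator B (fwd l x u) \<partial>lborel)"
    by (intro nn_integral_cong) (simp add: indicator_def)
  also have "\<dots> = (\<integral>\<^sup>+t. indicator {0..<l} t * indicator B t \<partial>lborel)"
    by (rule trans_int[OF assms(1,2)]) (rule borel_measurable_indicator[OF assms(3)])
  also have "\<dots> = (\<integral>\<^sup>+t. indicator ({0..<l} \<inter> B) t \<partial>lborel)"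
    by (intro nn_integral_cong) (simp add: indicator_def)
  also have "\<dots> = emeasure lborel ({0..<l} \<inter> B)"
    by (rule nn_integral_indicator) (use assms(3) in auto)
  finally show ?thesis .
qed

context
  fixes l r a :: real and \<eta> :: "real multiset" and A
  assumes A: "A = set_mset \<eta>" "A \<subseteq> {0..<l}"
    and par: "0 < r" "0 < a" "a \<le> l / 2" "a \<le> 2 * r"
begin

lemma lpos: "0 < l" using par by simp

lemma hh_nonneg: "w \<in> A \<Longrightarrow> 0 \<le> hh l r A w"
  using gap_props(1)[OF fA[OF A] A(2), of w] par by (auto simp: hh_def)

lemma hh_le: "w \<in> A \<Longrightarrow> hh l r A w \<le> l / 2"
  using gap_props(2)[OF fA[OF A] A(2), of w] par by (auto simp: hh_def min_def)

lemma emeasure_Rset: assumes w: "w \<in> A" shows "emeasure lborel (Rset l r A w) = hh l r A w"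
proof -
  have "Rset l r A w = {u \<in> {0..<l}. fwd l w u \<in> {0<..<hh l r A w}}" by (auto simp: Rset_def)
  then have "emeasure lborel (Rset l r A w) = emeasure lborel ({0..<l} \<inter> {0<..<hh l r A w})"
    using emeasure_fwd_set[of w l "{0<..<hh l r A w}"] inA[OF A w] by simp
  also have "{0..<l} \<inter> {0<..<hh l r A w} = {0<..<hh l r A w}" using hh_le[OF w] lpos by auto
  finally show ?thesis using hh_nonneg[OF w] by simp
qed

lemma emeasure_Lset: assumes w: "w \<in> A" shows "emeasure lborel (Lset l r A w) = hh l r A w"
proof -
  have w': "succ l A w \<in> A" using gap_props(4)[OF fA[OF A] A(2) w] .
  have "Lset l r A w = {u \<in> {0..<l}. fwd l (succ l A w) u \<in> {l - hh l r A w<..}}" by (auto simp: Lset_def)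
  then have "emeasure lborel (Lset l r A w) = emeasure lborel ({0..<l} \<inter> {l - hh l r A w<..})"
    using emeasure_fwd_set[of "succ l A w" l "{l - hh l r A w<..}"] inA[OF A w'] by simp
  also have "{0..<l} \<inter> {l - hh l r A w<..} = {l - hh l r A w<..<l}" using hh_le[OF w] lpos by auto
  finally show ?thesis using hh_nonneg[OF w] by simp
qed

lemma Kf_range: "0 \<le> x \<Longrightarrow> x < l \<Longrightarrow> 0 \<le> z \<Longrightarrow> z < l \<Longrightarrow> 0 \<le> Kf l a x z \<and> Kf l a x z \<le> a"
  using cd_nonneg[of x l z] par unfolding Kf_def by auto

lemma arc_int:
  assumes w: "w \<in> A" and z: "z \<in> A"
  shows "(\<integral>\<^sup>+u. indicator (arcS l A w) u * ennreal (Kf l a u z) \<partial>lborel)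
           \<le> ennreal (hh l r A w * (Kf l a w z + Kf l a (succ l A w) z))"
proof -
  define g where "g = gap l A w"
  define w' where "w' = succ l A w"
  define K1 where "K1 = Kf l a w z"
  define K2 where "K2 = Kf l a w' z"
  have w': "w' \<in> A" using gap_props(4)[OF fA[OF A] A(2) w] by (simp add: w'_def)
  have st: "(w' = w \<and> g = l) \<or> (w' \<noteq> w \<and> fwd l w w' = g)"
    using gap_props(5)[OF fA[OF A] A(2) w] by (simp add: w'_def g_def)
  have g0: "0 < g" "g \<le> l" using gap_props(1,2)[OF fA[OF A] A(2) w] by (auto simp: g_def)
  have zc: "z = w \<or> g \<le> fwd l w z" using gap_props(3)[OF fA[OF A] A(2) w z] by (auto simp: g_def)
  have wb: "0 \<le> w" "w < l" using inA[OF A w] by auto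
  have w'b: "0 \<le> w'" "w' < l" using inA[OF A w'] by auto
  have zb: "0 \<le> z" "z < l" using inA[OF A z] by auto
  have K1b: "0 \<le> K1" "K1 \<le> a" using Kf_range[OF wb zb] by (auto simp: K1_def)
  have K2b: "0 \<le> K2" "K2 \<le> a" using Kf_range[OF w'b zb] by (auto simp: K2_def)
  have Kd: "\<bar>K1 - K2\<bar> \<le> g"
  proof -
    have "\<bar>K1 - K2\<bar> \<le> circ_dist l w w'" unfolding K1_def K2_def by (rule K_lip) (use wb w'b zb in auto)
    moreover have "circ_dist l w w' \<le> g"
    proof (cases "w' = w")
      case True then show ?thesis using g0 by (simp add: circ_dist_def)
    next
      case False then show ?thesis using st cd_le_fwd[OF wb w'b] by auto
    qed
    ultimately show ?thesis by simp
  qed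
  define H where "H t = (if g \<le> 2 * r then K1 + ((K2 - K1) / g) * t
                         else K1 * max 0 (1 - t / a) + K2 * max 0 (1 - (g - t) / a))" for t
  have Hpt: "Kf l a u z \<le> H (fwd l w u)" if u: "u \<in> arcS l A w" for u
  proof -
    have ub: "0 \<le> u" "u < l" and tg: "fwd l w u < g" using u by (auto simp: arcS_def g_def)
    have t0: "0 \<le> fwd l w u" using fwd_range[OF wb ub] by simp
    have m: "Kf l a u z \<le> max (max 0 (K1 - fwd l w u)) (max 0 (K2 - (g - fwd l w u)))"
      unfolding K1_def K2_def by (rule K_arc_max) (use wb ub zb w'b tg g0 zc st in auto)
    show ?thesis
    proof (cases "g \<le> 2 * r")
      case True
      have "max (max 0 (K1 - fwd l w u)) (max 0 (K2 - (g - fwd l w u))) \<le> K1 + (K2 - K1) * fwd l w u / g"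
        by (rule chord_bound) (use K1b K2b Kd t0 tg g0 in auto)
      then have "Kf l a u z \<le> K1 + (K2 - K1) * fwd l w u / g" using m by linarith
      then show ?thesis using True by (simp add: H_def)
    next
      case False
      have h1: "max 0 (K1 - fwd l w u) \<le> K1 * max 0 (1 - fwd l w u / a)"
        by (rule hat_bound) (use K1b t0 par in auto)
      have h2: "max 0 (K2 - (g - fwd l w u)) \<le> K2 * max 0 (1 - (g - fwd l w u) / a)"
        by (rule hat_bound) (use K2b tg par in auto)
      have "0 \<le> K1 * max 0 (1 - fwd l w u / a)" "0 \<le> K2 * max 0 (1 - (g - fwd l w u) / a)"
        using K1b K2b by auto
      then show ?thesis using m h1 h2 False by (simp add: H_def)
    qed
  qed
  have H0: "0 \<le> H t" if "0 \<le> t" "t \<le> g" for t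
  proof (cases "g \<le> 2 * r")
    case True
    have "K1 + ((K2 - K1) / g) * t = (K1 * (g - t) + K2 * t) / g" using g0 by (simp add: field_simps)
    moreover have "0 \<le> (K1 * (g - t) + K2 * t) / g" using K1b K2b that g0 by simp
    ultimately show ?thesis using True by (simp add: H_def)
  next
    case False then show ?thesis using K1b K2b by (simp add: H_def)
  qed
  have Hm[measurable]: "H \<in> borel_measurable borel" unfolding H_def by measurable
  have "(\<integral>\<^sup>+u. indicator (arcS l A w) u * ennreal (Kf l a u z) \<partial>lborel)
        \<le> (\<integral>\<^sup>+u. indicator {0..<l} u * ennreal (indicator {0..<g} (fwd l w u) * H (fwd l w u)) \<partial>lborel)"
  proof (intro nn_integral_mono)
    fix u
    show "indicator (arcS l A w) u * ennreal (Kf l a u z)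
         \<le> indicator {0..<l} u * ennreal (indicator {0..<g} (fwd l w u) * H (fwd l w u))"
    proof (cases "u \<in> arcS l A w")
      case True
      then have "u \<in> {0..<l}" "fwd l w u \<in> {0..<g}"
        using fwd_range[OF wb, of u] by (auto simp: arcS_def g_def)
      then show ?thesis using Hpt[OF True] True by (simp add: ennreal_leI)
    next
      case False then show ?thesis by simp
    qed
  qed
  also have "\<dots> = (\<integral>\<^sup>+t. indicator {0..<l} t * ennreal (indicator {0..<g} t * H t) \<partial>lborel)"
    by (rule trans_int[OF wb]) measurable
  also have "\<dots> \<le> ennreal (hh l r A w * (K1 + K2))"
  proof (cases "g \<le> 2 * r")
    case True
    have "(\<integral>\<^sup>+t. indicator {0..<l} t * ennreal (indicator {0..<g} t * H t) \<partial>lborel)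
          \<le> (\<integral>\<^sup>+t. ennreal (K1 + ((K2 - K1) / g) * t) * indicator {0..g} t \<partial>lborel)"
    proof (intro nn_integral_mono)
      fix t show "indicator {0..<l} t * ennreal (indicator {0..<g} t * H t)
                  \<le> ennreal (K1 + ((K2 - K1) / g) * t) * indicator {0..g} t"
        using True by (auto simp: indicator_def H_def)
    qed
    also have "\<dots> = ennreal (K1 * (g - 0) + ((K2 - K1) / g) * ((g\<^sup>2 - 0\<^sup>2) / 2))"
    proof (rule nn_integral_has_integral_lebesgue')
      show "\<And>x. x \<in> {0..g} \<Longrightarrow> 0 \<le> K1 + (K2 - K1) / g * x"
        using H0 True by (auto simp: H_def)
      show "((\<lambda>t. K1 + (K2 - K1) / g * t) has_integral K1 * (g - 0) + (K2 - K1) / g * ((g\<^sup>2 - 0\<^sup>2) / 2)) {0..g}"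
        by (rule affine_int) (use g0 in auto)
    qed
    also have "K1 * (g - 0) + ((K2 - K1) / g) * ((g\<^sup>2 - 0\<^sup>2) / 2) = hh l r A w * (K1 + K2)"
      using True g0 by (simp add: hh_def g_def[symmetric] min_def power2_eq_square field_simps)
    finally show ?thesis .
  next
    case False
    have ag: "a \<le> g" using False par by simp
    have "(\<integral>\<^sup>+t. indicator {0..<l} t * ennreal (indicator {0..<g} t * H t) \<partial>lborel)
          \<le> (\<integral>\<^sup>+t. ennreal (K1 + (- K1 / a) * t) * indicator {0..a} t
                + ennreal ((K2 * (1 - g / a)) + (K2 / a) * t) * indicator {g - a..g} t \<partial>lborel)"
    proof (intro nn_integral_mono)
      fix t
      show "indicator {0..<l} t * ennreal (indicator {0..<g} t * H t)
            \<le> ennreal (K1 + (- K1 / a) * t) * indicator {0..a} t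
                + ennreal ((K2 * (1 - g / a)) + (K2 / a) * t) * indicator {g - a..g} t"
      proof (cases "0 \<le> t \<and> t < g")
        case True
        have e1: "K1 * max 0 (1 - t / a) = (if t \<le> a then K1 + (- K1 / a) * t else 0)"
          using par K1b by (auto simp: max_def field_simps)
        have e2: "K2 * max 0 (1 - (g - t) / a) = (if g - a \<le> t then K2 * (1 - g / a) + (K2 / a) * t else 0)"
          using par K2b by (auto simp: max_def field_simps)
        have p1: "0 \<le> K1 * max 0 (1 - t / a)" "0 \<le> K2 * max 0 (1 - (g - t) / a)" using K1b K2b by auto
        have "ennreal (H t) = ennreal (K1 * max 0 (1 - t / a)) + ennreal (K2 * max 0 (1 - (g - t) / a))"
          using False p1 by (simp add: H_def ennreal_plus)
        also have "\<dots> = ennreal (K1 + (- K1 / a) * t) * indicator {0..a} t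
                + ennreal ((K2 * (1 - g / a)) + (K2 / a) * t) * indicator {g - a..g} t"
          unfolding e1 e2 using True by (auto simp: indicator_def)
        finally show ?thesis using True by (simp add: indicator_def)
      next
        case False then show ?thesis by (auto simp: indicator_def)
      qed
    qed
    also have "\<dots> = (\<integral>\<^sup>+t. ennreal (K1 + (- K1 / a) * t) * indicator {0..a} t \<partial>lborel)
                + (\<integral>\<^sup>+t. ennreal ((K2 * (1 - g / a)) + (K2 / a) * t) * indicator {g - a..g} t \<partial>lborel)"
      by (rule nn_integral_add) auto
    also have "(\<integral>\<^sup>+t. ennreal (K1 + (- K1 / a) * t) * indicator {0..a} t \<partial>lborel)
               = ennreal (K1 * (a - 0) + (- K1 / a) * ((a\<^sup>2 - 0\<^sup>2) / 2))"
    proof (rule nn_integral_has_integral_lebesgue')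
      show "\<And>x. x \<in> {0..a} \<Longrightarrow> 0 \<le> K1 + - K1 / a * x"
      proof -
        fix x assume x: "x \<in> {0..a}"
        have "K1 * x \<le> K1 * a" using x K1b by (intro mult_left_mono) auto
        then have "K1 * x / a \<le> K1" using par by (simp add: divide_le_eq)
        then show "0 \<le> K1 + - K1 / a * x" by simp
      qed
      show "((\<lambda>t. K1 + - K1 / a * t) has_integral K1 * (a - 0) + - K1 / a * ((a\<^sup>2 - 0\<^sup>2) / 2)) {0..a}"
        by (rule affine_int) (use par in auto)
    qed
    also have "(\<integral>\<^sup>+t. ennreal ((K2 * (1 - g / a)) + (K2 / a) * t) * indicator {g - a..g} t \<partial>lborel)
               = ennreal ((K2 * (1 - g / a)) * (g - (g - a)) + (K2 / a) * ((g\<^sup>2 - (g - a)\<^sup>2) / 2))"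
    proof (rule nn_integral_has_integral_lebesgue')
      show "\<And>x. x \<in> {g - a..g} \<Longrightarrow> 0 \<le> K2 * (1 - g / a) + K2 / a * x"
      proof -
        fix x assume x: "x \<in> {g - a..g}"
        have "K2 * (1 - g / a) + K2 / a * x = K2 * (a - g + x) / a" using par by (simp add: field_simps)
        moreover have "0 \<le> K2 * (a - g + x) / a" using x par K2b by simp
        ultimately show "0 \<le> K2 * (1 - g / a) + K2 / a * x" by simp
      qed
      show "((\<lambda>t. K2 * (1 - g / a) + K2 / a * t) has_integral
             K2 * (1 - g / a) * (g - (g - a)) + K2 / a * ((g\<^sup>2 - (g - a)\<^sup>2) / 2)) {g - a..g}"
        by (rule affine_int) (use par in auto)
    qed
    also have "ennreal (K1 * (a - 0) + (- K1 / a) * ((a\<^sup>2 - 0\<^sup>2) / 2))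
             + ennreal ((K2 * (1 - g / a)) * (g - (g - a)) + (K2 / a) * ((g\<^sup>2 - (g - a)\<^sup>2) / 2))
             = ennreal (a / 2 * K1) + ennreal (a / 2 * K2)"
    proof -
      have e1: "K1 * (a - 0) + (- K1 / a) * ((a\<^sup>2 - 0\<^sup>2) / 2) = a / 2 * K1"
        using par by (simp add: power2_eq_square field_simps)
      have e2: "(K2 * (1 - g / a)) * (g - (g - a)) + (K2 / a) * ((g\<^sup>2 - (g - a)\<^sup>2) / 2) = a / 2 * K2"
        using par by (simp add: power2_eq_square field_simps)
      show ?thesis by (simp only: e1 e2)
    qed
    also have "\<dots> = ennreal (a / 2 * K1 + a / 2 * K2)"
      by (rule ennreal_plus[symmetric]) (use par K1b K2b in auto)
    also have "a / 2 * K1 + a / 2 * K2 = a / 2 * (K1 + K2)" by (simp add: distrib_left)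
    also have "\<dots> \<le> ennreal (hh l r A w * (K1 + K2))"
    proof (rule ennreal_leI)
      have "hh l r A w = r" using False by (simp add: hh_def g_def[symmetric] min_def)
      then show "a / 2 * (K1 + K2) \<le> hh l r A w * (K1 + K2)"
        using par K1b K2b by (intro mult_right_mono) auto
    qed
    finally show ?thesis .
  qed
  finally show ?thesis by (simp add: K1_def K2_def w'_def)
qed


lemma cellR: assumes "w \<in> A" "x \<in> A"
  shows "cell l r \<eta> x \<inter> Rset l r A w = (if x = w then Rset l r A w else {})"
  using Rset_cell[OF A assms(1)] cell_disj[OF A assms(2,1)] by auto

lemma cellL: assumes "w \<in> A" "x \<in> A"
  shows "cell l r \<eta> x \<inter> Lset l r A w = (if x = succ l A w then Lset l r A w else {})"
  using Lset_cell[OF A assms(1)] cell_disj[OF A assms(2) gap_props(4)[OF fA[OF A] A(2) assms(1)]] by auto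

lemma geo_z:
  assumes z: "z \<in> A"
  shows "(\<integral>\<^sup>+u. indicator {0..<l} u * ennreal (Kf l a u z) \<partial>lborel)
          \<le> (\<Sum>x\<in>A. emeasure lborel (cell l r \<eta> x) * ennreal (Kf l a x z))"
proof -
  have fin: "finite A" using fA[OF A] .
  have ne: "A \<noteq> {}" using z by auto
  have "(\<integral>\<^sup>+u. indicator {0..<l} u * ennreal (Kf l a u z) \<partial>lborel)
        = (\<integral>\<^sup>+u. (\<Sum>w\<in>A. indicator (arcS l A w) u * ennreal (Kf l a u z)) \<partial>lborel)"
    by (intro nn_integral_cong) (simp add: arc_partition[OF fin A(2) ne, symmetric] sum_distrib_right)
  also have "\<dots> = (\<Sum>w\<in>A. (\<integral>\<^sup>+u. indicator (arcS l A w) u * ennreal (Kf l a u z) \<partial>lborel))"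
    by (rule nn_integral_sum) measurable
  also have "\<dots> \<le> (\<Sum>w\<in>A. ennreal (hh l r A w * (Kf l a w z + Kf l a (succ l A w) z)))"
    by (intro sum_mono arc_int z)
  also have "\<dots> = (\<Sum>w\<in>A. \<Sum>x\<in>A. (emeasure lborel (cell l r \<eta> x \<inter> Rset l r A w)
                      + emeasure lborel (cell l r \<eta> x \<inter> Lset l r A w)) * ennreal (Kf l a x z))"
  proof (rule sum.cong[OF refl])
    fix w assume w: "w \<in> A"
    have sw: "succ l A w \<in> A" using gap_props(4)[OF fin A(2) w] .
    have K0: "0 \<le> Kf l a w z" "0 \<le> Kf l a (succ l A w) z" by (auto simp: Kf_def)
    have "(\<Sum>x\<in>A. (emeasure lborel (cell l r \<eta> x \<inter> Rset l r A w)
                      + emeasure lborel (cell l r \<eta> x \<inter> Lset l r A w)) * ennreal (Kf l a x z))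
        = (\<Sum>x\<in>A. (if x = w then emeasure lborel (Rset l r A w) * ennreal (Kf l a x z) else 0))
          + (\<Sum>x\<in>A. (if x = succ l A w then emeasure lborel (Lset l r A w) * ennreal (Kf l a x z) else 0))"
      unfolding sum.distrib[symmetric]
      by (intro sum.cong[OF refl]) (simp add: cellR[OF w] cellL[OF w] distrib_right)
    also have "\<dots> = emeasure lborel (Rset l r A w) * ennreal (Kf l a w z)
                    + emeasure lborel (Lset l r A w) * ennreal (Kf l a (succ l A w) z)"
      using w sw fin by (simp add: sum.delta)
    also have "\<dots> = ennreal (hh l r A w * Kf l a w z) + ennreal (hh l r A w * Kf l a (succ l A w) z)"
      using hh_nonneg[OF w] K0 by (simp add: emeasure_Rset[OF w] emeasure_Lset[OF w] ennreal_mult)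
    also have "\<dots> = ennreal (hh l r A w * Kf l a w z + hh l r A w * Kf l a (succ l A w) z)"
      by (rule ennreal_plus[symmetric]) (use hh_nonneg[OF w] K0 in auto)
    also have "hh l r A w * Kf l a w z + hh l r A w * Kf l a (succ l A w) z = hh l r A w * (Kf l a w z + Kf l a (succ l A w) z)"
      by (simp add: distrib_left)
    finally show "ennreal (hh l r A w * (Kf l a w z + Kf l a (succ l A w) z)) =
       (\<Sum>x\<in>A. (emeasure lborel (cell l r \<eta> x \<inter> Rset l r A w)
                      + emeasure lborel (cell l r \<eta> x \<inter> Lset l r A w)) * ennreal (Kf l a x z))" by simp
  qed
  also have "\<dots> = (\<Sum>x\<in>A. (\<Sum>w\<in>A. emeasure lborel (cell l r \<eta> x \<inter> (Rset l r A w \<union> Lset l r A w))) * ennreal (Kf l a x z))"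
    unfolding sum_distrib_right
  proof (subst sum.swap, intro sum.cong[OF refl])
    fix x w assume "x \<in> A" "w \<in> A"
    have "emeasure lborel (cell l r \<eta> x \<inter> Rset l r A w) + emeasure lborel (cell l r \<eta> x \<inter> Lset l r A w)
          = emeasure lborel (cell l r \<eta> x \<inter> Rset l r A w \<union> cell l r \<eta> x \<inter> Lset l r A w)"
      by (rule plus_emeasure) (use RL_disj[OF A \<open>w \<in> A\<close>] in auto)
    then show "(emeasure lborel (cell l r \<eta> x \<inter> Rset l r A w) + emeasure lborel (cell l r \<eta> x \<inter> Lset l r A w))
           * ennreal (Kf l a x z) =
         emeasure lborel (cell l r \<eta> x \<inter> (Rset l r A w \<union> Lset l r A w)) * ennreal (Kf l a x z)"
      by (simp add: Int_Un_distrib)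
  qed
  also have "\<dots> \<le> (\<Sum>x\<in>A. emeasure lborel (cell l r \<eta> x) * ennreal (Kf l a x z))"
  proof (intro sum_mono mult_right_mono)
    fix x assume x: "x \<in> A"
    have "(\<Sum>w\<in>A. emeasure lborel (cell l r \<eta> x \<inter> (Rset l r A w \<union> Lset l r A w)))
          = emeasure lborel (\<Union>w\<in>A. cell l r \<eta> x \<inter> (Rset l r A w \<union> Lset l r A w))"
    proof (rule sum_emeasure)
      show "(\<lambda>w. cell l r \<eta> x \<inter> (Rset l r A w \<union> Lset l r A w)) ` A \<subseteq> sets lborel" by auto
      show "finite A" by (rule fin)
      show "disjoint_family_on (\<lambda>w. cell l r \<eta> x \<inter> (Rset l r A w \<union> Lset l r A w)) A"
        unfolding disjoint_family_on_def
      proof (intro ballI impI)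
        fix w1 w2 assume "w1 \<in> A" "w2 \<in> A" "w1 \<noteq> w2"
        then have "arcS l A w1 \<inter> arcS l A w2 = {}" by (rule arc_disj[OF fin A(2)])
        then show "cell l r \<eta> x \<inter> (Rset l r A w1 \<union> Lset l r A w1) \<inter> (cell l r \<eta> x \<inter> (Rset l r A w2 \<union> Lset l r A w2)) = {}"
          using Rset_arc[OF A \<open>w1 \<in> A\<close>] Lset_arc[OF A \<open>w1 \<in> A\<close>] Rset_arc[OF A \<open>w2 \<in> A\<close>] Lset_arc[OF A \<open>w2 \<in> A\<close>]
          by blast
      qed
    qed
    also have "\<dots> \<le> emeasure lborel (cell l r \<eta> x)" by (rule emeasure_mono) auto
    finally show "(\<Sum>w\<in>A. emeasure lborel (cell l r \<eta> x \<inter> (Rset l r A w \<union> Lset l r A w))) \<le> emeasure lborel (cell l r \<eta> x)" .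
  qed simp
  finally show ?thesis .
qed

end

definition Kz :: "real \<Rightarrow> real \<Rightarrow> real multiset \<Rightarrow> real \<Rightarrow> real" where
  "Kz l a \<zeta> x = sum_mset (image_mset (\<lambda>y. Kf l a x y) \<zeta>)"

definition Bf :: "real \<Rightarrow> real \<Rightarrow> real multiset \<Rightarrow> real multiset \<Rightarrow> real" where
  "Bf l a \<eta> \<zeta> = sum_mset (image_mset (\<lambda>x. Kz l a \<zeta> x) \<eta>)"

definition Qf :: "real \<Rightarrow> real \<Rightarrow> real multiset \<Rightarrow> real" where
  "Qf l a \<eta> = Bf l a \<eta> \<eta>"

lemma a_norm_Qf: "a_norm l a \<eta> = sqrt (Qf l a \<eta>)"
  unfolding a_norm_def Qf_def Bf_def Kz_def Kf_def ..

lemma Kf_sym: "Kf l a x y = Kf l a y x"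
  unfolding Kf_def using cd_sym by metis

lemma Kf_diag: "0 \<le> l \<Longrightarrow> Kf l a x x = max 0 a"
  unfolding Kf_def circ_dist_def by simp

lemma Kf_nonneg: "0 \<le> Kf l a x y" unfolding Kf_def by simp

lemma Kz_add: "Kz l a (\<zeta>1 + \<zeta>2) x = Kz l a \<zeta>1 x + Kz l a \<zeta>2 x"
  unfolding Kz_def by simp

lemma Kz_single: "Kz l a {#y#} x = Kf l a x y" unfolding Kz_def by simp

lemma Kz_empty: "Kz l a {#} x = 0" unfolding Kz_def by simp

lemma Kz_nonneg: "0 \<le> Kz l a \<zeta> x"
  unfolding Kz_def by (induction \<zeta>) (auto simp: Kf_nonneg)

lemma Bf_add1: "Bf l a (\<eta>1 + \<eta>2) \<zeta> = Bf l a \<eta>1 \<zeta> + Bf l a \<eta>2 \<zeta>"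
  unfolding Bf_def by simp

lemma Bf_add2: "Bf l a \<eta> (\<zeta>1 + \<zeta>2) = Bf l a \<eta> \<zeta>1 + Bf l a \<eta> \<zeta>2"
  unfolding Bf_def Kz_add by (induction \<eta>) auto

lemma Bf_single1: "Bf l a {#x#} \<zeta> = Kz l a \<zeta> x" unfolding Bf_def by simp

lemma Bf_empty1: "Bf l a {#} \<zeta> = 0" unfolding Bf_def by simp

lemma Bf_sym: "Bf l a \<eta> \<zeta> = Bf l a \<zeta> \<eta>"
proof (induction \<eta>)
  case empty
  have "Bf l a \<zeta> {#} = 0" unfolding Bf_def Kz_def by (induction \<zeta>) auto
  then show ?case by (simp add: Bf_empty1)
next
  case (add x \<eta>)
  have "Bf l a \<zeta> {#x#} = Kz l a \<zeta> x"
    unfolding Bf_def Kz_def by (induction \<zeta>) (auto simp: Kf_sym)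
  then show ?case using add
    by (metis Bf_add1 Bf_add2 Bf_single1 add_mset_add_single add.commute)
qed

lemma Qf_add: "Qf l a (\<eta> + \<zeta>) = Qf l a \<eta> + 2 * Bf l a \<eta> \<zeta> + Qf l a \<zeta>"
  unfolding Qf_def Bf_add1 Bf_add2 using Bf_sym[of l a \<zeta> \<eta>] by simp

lemma Qf_single: "0 \<le> l \<Longrightarrow> 0 < a \<Longrightarrow> Qf l a {#x#} = a"
  unfolding Qf_def Bf_single1 Kz_single using Kf_diag by simp

lemma Qf_remove:
  assumes "x \<in># \<eta>" "0 \<le> l" "0 < a"
  shows "Qf l a (\<eta> - {#x#}) = Qf l a \<eta> - 2 * Kz l a \<eta> x + a"
proof -
  define \<eta>0 where "\<eta>0 = \<eta> - {#x#}"
  have e: "\<eta> = \<eta>0 + {#x#}" using assms(1) by (simp add: \<eta>0_def)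
  have "Qf l a \<eta> = Qf l a \<eta>0 + 2 * Kz l a \<eta>0 x + a"
    unfolding e Qf_add Qf_single[OF assms(2,3)] using Bf_sym[of l a \<eta>0 "{#x#}"] by (simp add: Bf_single1)
  moreover have "Kz l a \<eta> x = Kz l a \<eta>0 x + a"
    unfolding e Kz_add Kz_single using Kf_diag[OF assms(2), of a x] assms(3) by simp
  ultimately show ?thesis by (simp add: \<eta>0_def)
qed

lemma Bf_le:
  fixes l a :: real
  assumes "set_mset \<eta> \<subseteq> {0..<l}" "set_mset \<zeta> \<subseteq> {0..<l}" "0 < a"
  shows "Bf l a \<eta> \<zeta> \<le> a * real (size \<eta>) * real (size \<zeta>)"
proof -
  have Kfa: "Kf l a x y \<le> a" if "x \<in> {0..<l}" "y \<in> {0..<l}" for x y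
    using cd_nonneg[of x l y] that assms(3) unfolding Kf_def by auto
  have "Kz l a \<zeta> x \<le> a * real (size \<zeta>)" if "x \<in> {0..<l}" for x
  proof -
    have "Kz l a \<zeta> x \<le> sum_mset (image_mset (\<lambda>y. a) \<zeta>)"
      unfolding Kz_def by (rule sum_mset_mono) (use Kfa that assms(2) in auto)
    then show ?thesis by (simp add: mult.commute)
  qed
  then have "Bf l a \<eta> \<zeta> \<le> sum_mset (image_mset (\<lambda>x. a * real (size \<zeta>)) \<eta>)"
    unfolding Bf_def by (intro sum_mset_mono) (use assms(1) in auto)
  then show ?thesis by (simp add: mult.commute mult.left_commute)
qed

lemma Qf_ge:
  fixes l a :: real
  assumes "0 \<le> l" "0 < a"
  shows "a * real (size \<eta>) \<le> Qf l a \<eta>"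
proof -
  have "a \<le> Kz l a \<eta> x" if "x \<in># \<eta>" for x
  proof -
    have e: "\<eta> = (\<eta> - {#x#}) + {#x#}" using that by simp
    have "Kz l a \<eta> x = Kz l a (\<eta> - {#x#}) x + a"
      by (subst e, unfold Kz_add Kz_single) (use Kf_diag[OF assms(1), of a x] assms(2) in simp)
    then show ?thesis using Kz_nonneg[of l a "\<eta> - {#x#}" x] by simp
  qed
  then have "sum_mset (image_mset (\<lambda>x. a) \<eta>) \<le> Qf l a \<eta>"
    unfolding Qf_def Bf_def by (intro sum_mset_mono) auto
  then show ?thesis by (simp add: mult.commute)
qed

lemma Qf_nonneg: "0 \<le> Qf l a \<eta>"
proof -
  have "sum_mset (image_mset (\<lambda>x. 0::real) \<eta>) \<le> Qf l a \<eta>"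
    unfolding Qf_def Bf_def by (intro sum_mset_mono) (simp add: Kz_nonneg)
  then show ?thesis by simp
qed

definition Im :: "real \<Rightarrow> real \<Rightarrow> real \<Rightarrow> real" where
  "Im l a z = enn2real (\<integral>\<^sup>+u. ennreal (Kf l a u z) \<partial>unif l)"

context
  fixes l r a :: real
  assumes par: "0 < r" "0 < a" "a \<le> l / 2" "a \<le> 2 * r"
begin

lemma l0: "0 < l" using par by simp

lemma emeas_I: "emeasure lborel {0..<l} = ennreal l" using l0 by simp

lemma unif_prob: "prob_space (unif l)"
  unfolding unif_def by (rule prob_space_uniform_measure) (use l0 in auto)

lemma sets_unif[simp, measurable_cong]: "sets (unif l) = sets borel"
  unfolding unif_def by simp

lemma space_unif[simp]: "space (unif l) = UNIV"
  unfolding unif_def by simp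

lemma nn_int_unif:
  assumes [measurable]: "f \<in> borel_measurable borel"
  shows "(\<integral>\<^sup>+u. f u \<partial>unif l) = (\<integral>\<^sup>+u. indicator {0..<l} u * f u \<partial>lborel) / ennreal l"
  unfolding unif_def
  by (subst nn_integral_uniform_measure) (auto simp: emeas_I mult.commute)

lemma measure_unif:
  assumes "S \<in> sets borel" "S \<subseteq> {0..<l}"
  shows "measure (unif l) S = measure lborel S / l"
proof -
  have "measure (unif l) S = measure lborel ({0..<l} \<inter> S) / measure lborel {0..<l}"
    unfolding unif_def by (rule measure_uniform_measure) (use assms l0 in auto)
  then show ?thesis using assms l0 by (simp add: Int_absorb1)
qed

lemma Kf_le_a: "0 \<le> x \<Longrightarrow> x < l \<Longrightarrow> 0 \<le> z \<Longrightarrow> z < l \<Longrightarrow> Kf l a x z \<le> a"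
  using cd_nonneg[of x l z] par unfolding Kf_def by auto

lemma Im_int:
  assumes z: "0 \<le> z" "z < l"
  shows "(\<integral>\<^sup>+u. ennreal (Kf l a u z) \<partial>unif l) = ennreal (Im l a z)"
    and "(\<integral>\<^sup>+u. indicator {0..<l} u * ennreal (Kf l a u z) \<partial>lborel) = ennreal (l * Im l a z)"
    and "Im l a z \<le> a" "0 \<le> Im l a z"
proof -
  have "(\<integral>\<^sup>+u. indicator {0..<l} u * ennreal (Kf l a u z) \<partial>lborel) \<le> (\<integral>\<^sup>+u. ennreal a * indicator {0..<l} u \<partial>lborel)"
    by (intro nn_integral_mono) (use Kf_le_a z in \<open>auto simp: indicator_def intro!: ennreal_leI\<close>)
  also have "\<dots> = ennreal (a * l)" using par l0 by (simp add: nn_integral_cmult_indicator ennreal_mult)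
  finally have le: "(\<integral>\<^sup>+u. indicator {0..<l} u * ennreal (Kf l a u z) \<partial>lborel) \<le> ennreal (a * l)" .
  then obtain c where c: "(\<integral>\<^sup>+u. indicator {0..<l} u * ennreal (Kf l a u z) \<partial>lborel) = ennreal c" "0 \<le> c" "c \<le> a * l"
    using par l0 by (cases "(\<integral>\<^sup>+u. indicator {0..<l} u * ennreal (Kf l a u z) \<partial>lborel)") (auto simp: top_unique)
  have "(\<integral>\<^sup>+u. ennreal (Kf l a u z) \<partial>unif l) = (\<integral>\<^sup>+u. indicator {0..<l} u * ennreal (Kf l a u z) \<partial>lborel) / ennreal l"
    by (rule nn_int_unif) measurable
  then have u: "(\<integral>\<^sup>+u. ennreal (Kf l a u z) \<partial>unif l) = ennreal (c / l)"
    using c l0 by (simp add: divide_ennreal)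
  then have Ie: "Im l a z = c / l" using c l0 by (simp add: Im_def)
  show "(\<integral>\<^sup>+u. ennreal (Kf l a u z) \<partial>unif l) = ennreal (Im l a z)" using u Ie by simp
  show "(\<integral>\<^sup>+u. indicator {0..<l} u * ennreal (Kf l a u z) \<partial>lborel) = ennreal (l * Im l a z)"
    using c Ie l0 by simp
  show "Im l a z \<le> a" using Ie c l0 by (simp add: divide_le_eq mult.commute)
  show "0 \<le> Im l a z" using Ie c l0 by simp
qed

lemma Im_lower:
  assumes z: "0 \<le> z" "z < l"
  shows "a\<^sup>2 / (4 * l) \<le> Im l a z"
proof -
  have "(\<integral>\<^sup>+u. indicator {u \<in> {0..<l}. fwd l z u \<in> {0..a/2}} u * ennreal (a / 2) \<partial>lborel)
        \<le> (\<integral>\<^sup>+u. indicator {0..<l} u * ennreal (Kf l a u z) \<partial>lborel)"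
  proof (intro nn_integral_mono)
    fix u
    show "indicator {u \<in> {0..<l}. fwd l z u \<in> {0..a/2}} u * ennreal (a / 2) \<le> indicator {0..<l} u * ennreal (Kf l a u z)"
    proof (cases "u \<in> {u \<in> {0..<l}. fwd l z u \<in> {0..a/2}}")
      case True
      then have ub: "0 \<le> u" "u < l" "fwd l z u \<le> a / 2" by auto
      have "circ_dist l u z \<le> a / 2" using cd_le_fwd[OF z ub(1,2)] cd_sym[of l u z] ub by simp
      then have "a / 2 \<le> Kf l a u z" unfolding Kf_def by (simp add: max_def)
      then show ?thesis using True by (simp add: ennreal_leI)
    qed simp
  qed
  moreover have "(\<integral>\<^sup>+u. indicator {u \<in> {0..<l}. fwd l z u \<in> {0..a/2}} u * ennreal (a / 2) \<partial>lborel)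
       = ennreal (a / 2) * emeasure lborel {u \<in> {0..<l}. fwd l z u \<in> {0..a/2}}"
  proof -
    have S0: "{u \<in> {0..<l}. fwd l z u \<in> {0..a/2}} = {0..<l} \<inter> fwd l z -` {0..a/2}" by auto
    have S: "{u \<in> {0..<l}. fwd l z u \<in> {0..a/2}} \<in> sets lborel" unfolding S0 sets_lborel
      using measurable_sets_borel[OF fwd_meas, of "{0..a/2}" l z] by auto
    show ?thesis by (subst nn_integral_cmult_indicator[symmetric, OF S]) (simp add: mult.commute)
  qed
  moreover have "emeasure lborel {u \<in> {0..<l}. fwd l z u \<in> {0..a/2}} = ennreal (a / 2)"
  proof -
    have "emeasure lborel {u \<in> {0..<l}. fwd l z u \<in> {0..a/2}} = emeasure lborel ({0..<l} \<inter> {0..a/2})"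
      by (rule emeasure_fwd_set) (use z in auto)
    also have "{0..<l} \<inter> {0..a/2} = {0..a/2}" using par by auto
    finally show ?thesis using par by simp
  qed
  ultimately have "ennreal (a / 2) * ennreal (a / 2) \<le> ennreal (l * Im l a z)"
    using Im_int(2)[OF z] by simp
  moreover have "ennreal (a / 2) * ennreal (a / 2) = ennreal (a / 2 * (a / 2))"
    by (rule ennreal_mult[symmetric]) (use par in auto)
  ultimately have "ennreal (a / 2 * (a / 2)) \<le> ennreal (l * Im l a z)" by simp
  then have "a / 2 * (a / 2) \<le> l * Im l a z"
    using Im_int(4)[OF z] l0 by (simp add: ennreal_le_iff)
  then show ?thesis using l0 by (simp add: power2_eq_square field_simps)
qed

end

lemma cell_sub_g: "cell l r \<eta> x \<subseteq> {0..<l}"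
  by (auto simp: cell_def rball_def circ_def)

lemma aux_div: "(x::real) / c + y * (z / c) = (x + y * z) / c"
  by (simp add: add_divide_distrib)

lemma sqrt_amgm:
  fixes q t :: real
  assumes "0 \<le> q" "0 < t"
  shows "sqrt q \<le> (q + t\<^sup>2) / (2 * t)"
proof -
  have "0 \<le> (sqrt q - t)\<^sup>2" by simp
  then have "2 * t * sqrt q \<le> q + t\<^sup>2" using assms(1) by (simp add: power2_eq_square algebra_simps)
  then show ?thesis using assms(2) by (simp add: le_divide_eq mult.commute)
qed

lemma sum_mset_swap:
  "(\<Sum>x\<in>A. f x * sum_mset (image_mset (g x) \<zeta>)) = sum_mset (image_mset (\<lambda>z. \<Sum>x\<in>A. f x * g x z) \<zeta>)"
  for f :: "'a \<Rightarrow> real"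
  by (induction \<zeta>) (auto simp: distrib_left sum.distrib)

context
  fixes l r a :: real
  assumes par: "0 < r" "0 < a" "a \<le> l / 2" "a \<le> 2 * r"
begin

lemma sp_cell:
  assumes "set_mset \<eta> \<subseteq> {0..<l}"
  shows "serve_prob l r \<eta> x = measure lborel (cell l r \<eta> x) / l"
  unfolding serve_prob_def cell_def[symmetric]
  by (rule measure_unif[OF par]) (use cell_sub_g in auto)

lemma sp_nonneg: "0 \<le> serve_prob l r \<eta> x"
  unfolding serve_prob_def by simp

lemma sp_sum:
  assumes "set_mset \<eta> \<subseteq> {0..<l}"
  shows "(\<Sum>x\<in>set_mset \<eta>. serve_prob l r \<eta> x) \<le> 1"
proof -
  interpret U: prob_space "unif l" by (rule unif_prob[OF par])
  have "(\<Sum>x\<in>set_mset \<eta>. serve_prob l r \<eta> x) = (\<Sum>x\<in>set_mset \<eta>. measure (unif l) (cell l r \<eta> x))"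
    unfolding serve_prob_def cell_def by (rule refl)
  also have "\<dots> = measure (unif l) (\<Union>x\<in>set_mset \<eta>. cell l r \<eta> x)"
  proof (rule measure_finite_Union[symmetric])
    show "finite (set_mset \<eta>)" by simp
    show "(\<lambda>x. cell l r \<eta> x) ` set_mset \<eta> \<subseteq> sets (unif l)" unfolding sets_unif[OF par] using sets_cell by blast
    show "disjoint_family_on (cell l r \<eta>) (set_mset \<eta>)"
      unfolding disjoint_family_on_def
    proof (intro ballI impI)
      fix x y assume "x \<in> set_mset \<eta>" "y \<in> set_mset \<eta>" "x \<noteq> y"
      then show "cell l r \<eta> x \<inter> cell l r \<eta> y = {}" by (rule cell_disj[OF refl assms])
    qed
    show "\<And>i. i \<in> set_mset \<eta> \<Longrightarrow> emeasure (unif l) (cell l r \<eta> i) \<noteq> \<infinity>" using U.emeasure_finite by (simp add: top_ennreal_def[symmetric])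
  qed
  also have "\<dots> \<le> 1" by (rule U.prob_le_1)
  finally show ?thesis .
qed

lemma geo_real:
  assumes sub: "set_mset \<eta> \<subseteq> {0..<l}" and z: "z \<in># \<eta>"
  shows "Im l a z \<le> (\<Sum>x\<in>set_mset \<eta>. serve_prob l r \<eta> x * Kf l a x z)"
proof -
  have zb: "0 \<le> z" "z < l" using z sub by auto
  have "ennreal (l * Im l a z) \<le> (\<Sum>x\<in>set_mset \<eta>. emeasure lborel (cell l r \<eta> x) * ennreal (Kf l a x z))"
    using geo_z[OF refl sub par, of z] z Im_int(2)[OF par zb] by simp
  also have "\<dots> = (\<Sum>x\<in>set_mset \<eta>. ennreal (measure lborel (cell l r \<eta> x) * Kf l a x z))"
  proof (rule sum.cong[OF refl])
    fix x
    have "emeasure lborel (cell l r \<eta> x) \<le> emeasure lborel {0..<l}"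
      by (rule emeasure_mono) (use cell_sub_g in auto)
    then have fin: "emeasure lborel (cell l r \<eta> x) \<noteq> \<top>" using l0[OF par] by (auto simp: top_unique)
    show "emeasure lborel (cell l r \<eta> x) * ennreal (Kf l a x z) = ennreal (measure lborel (cell l r \<eta> x) * Kf l a x z)"
      by (simp only: emeasure_eq_ennreal_measure[OF fin]) (simp add: ennreal_mult Kf_nonneg)
  qed
  also have "\<dots> = ennreal (\<Sum>x\<in>set_mset \<eta>. measure lborel (cell l r \<eta> x) * Kf l a x z)"
    by (rule sum_ennreal) (simp add: Kf_nonneg)
  finally have "l * Im l a z \<le> (\<Sum>x\<in>set_mset \<eta>. measure lborel (cell l r \<eta> x) * Kf l a x z)"
    by (subst (asm) ennreal_le_iff) (auto intro!: sum_nonneg simp: Kf_nonneg)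
  also have "\<dots> = l * (\<Sum>x\<in>set_mset \<eta>. serve_prob l r \<eta> x * Kf l a x z)"
    unfolding sum_distrib_left using l0[OF par] by (intro sum.cong[OF refl]) (simp add: sp_cell[OF sub])
  finally show ?thesis using l0[OF par] by simp
qed

lemma geo_sum:
  assumes sub: "set_mset \<eta> \<subseteq> {0..<l}"
  shows "sum_mset (image_mset (Im l a) \<eta>) \<le> (\<Sum>x\<in>set_mset \<eta>. serve_prob l r \<eta> x * Kz l a \<eta> x)"
proof -
  have "(\<Sum>x\<in>set_mset \<eta>. serve_prob l r \<eta> x * Kz l a \<eta> x)
        = sum_mset (image_mset (\<lambda>z. \<Sum>x\<in>set_mset \<eta>. serve_prob l r \<eta> x * Kf l a x z) \<eta>)"
    unfolding Kz_def by (rule sum_mset_swap[where f="serve_prob l r \<eta>" and A="set_mset \<eta>" and g="\<lambda>x y. Kf l a x y"])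
  moreover have "sum_mset (image_mset (Im l a) \<eta>) \<le> sum_mset (image_mset (\<lambda>z. \<Sum>x\<in>set_mset \<eta>. serve_prob l r \<eta> x * Kf l a x z) \<eta>)"
    by (rule sum_mset_mono) (rule geo_real[OF sub])
  ultimately show ?thesis by simp
qed

lemma serve_bound:
  assumes sub: "set_mset \<eta> \<subseteq> {0..<l}" and t: "0 < t"
  shows "serve_exp l r (a_norm l a) \<eta> \<le> (Qf l a \<eta> - 2 * sum_mset (image_mset (Im l a) \<eta>) + a + t\<^sup>2) / (2 * t)"
proof -
  define A where "A = set_mset \<eta>"
  define p where "p = serve_prob l r \<eta>"
  define P where "P = (\<Sum>x\<in>A. p x)"
  have p0: "\<And>x. 0 \<le> p x" by (simp add: p_def sp_nonneg)
  have P1: "P \<le> 1" unfolding P_def p_def A_def by (rule sp_sum[OF sub])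
  have P0: "0 \<le> P" unfolding P_def by (simp add: sum_nonneg p0)
  have Qrem: "\<And>x. x \<in> A \<Longrightarrow> Qf l a (\<eta> - {#x#}) = Qf l a \<eta> - 2 * Kz l a \<eta> x + a"
    using Qf_remove l0[OF par] par by (auto simp: A_def)
  have "serve_exp l r (a_norm l a) \<eta> = (\<Sum>x\<in>A. p x * sqrt (Qf l a (\<eta> - {#x#}))) + (1 - P) * sqrt (Qf l a \<eta>)"
    unfolding serve_exp_def a_norm_Qf by (simp add: A_def p_def P_def)
  also have "\<dots> \<le> (\<Sum>x\<in>A. p x * ((Qf l a (\<eta> - {#x#}) + t\<^sup>2) / (2 * t))) + (1 - P) * ((Qf l a \<eta> + t\<^sup>2) / (2 * t))"
    by (intro add_mono sum_mono mult_left_mono sqrt_amgm Qf_nonneg t p0) (use P1 in auto)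
  also have "\<dots> = ((\<Sum>x\<in>A. p x * (Qf l a \<eta> - 2 * Kz l a \<eta> x + a)) + P * t\<^sup>2 + (1 - P) * (Qf l a \<eta> + t\<^sup>2)) / (2 * t)"
  proof -
    have "(\<Sum>x\<in>A. p x * ((Qf l a (\<eta> - {#x#}) + t\<^sup>2) / (2 * t))) = (\<Sum>x\<in>A. p x * (Qf l a \<eta> - 2 * Kz l a \<eta> x + a) + p x * t\<^sup>2) / (2 * t)"
      unfolding sum_divide_distrib by (intro sum.cong[OF refl]) (simp add: Qrem add_divide_distrib distrib_left)
    also have "\<dots> = ((\<Sum>x\<in>A. p x * (Qf l a \<eta> - 2 * Kz l a \<eta> x + a)) + P * t\<^sup>2) / (2 * t)"
      by (simp add: sum.distrib P_def sum_distrib_right)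
    finally have e: "(\<Sum>x\<in>A. p x * ((Qf l a (\<eta> - {#x#}) + t\<^sup>2) / (2 * t))) = ((\<Sum>x\<in>A. p x * (Qf l a \<eta> - 2 * Kz l a \<eta> x + a)) + P * t\<^sup>2) / (2 * t)" .
    show ?thesis by (simp only: e aux_div)
  qed
  also have "\<dots> = (Qf l a \<eta> - 2 * (\<Sum>x\<in>A. p x * Kz l a \<eta> x) + a * P + t\<^sup>2) / (2 * t)"
  proof -
    have "(\<Sum>x\<in>A. p x * (Qf l a \<eta> - 2 * Kz l a \<eta> x + a)) = (\<Sum>x\<in>A. Qf l a \<eta> * p x - 2 * (p x * Kz l a \<eta> x) + a * p x)"
      by (rule sum.cong) (auto simp: algebra_simps)
    also have "\<dots> = Qf l a \<eta> * P - 2 * (\<Sum>x\<in>A. p x * Kz l a \<eta> x) + a * P"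
      by (simp add: sum.distrib sum_subtractf sum_distrib_left P_def)
    finally have e: "(\<Sum>x\<in>A. p x * (Qf l a \<eta> - 2 * Kz l a \<eta> x + a)) = Qf l a \<eta> * P - 2 * (\<Sum>x\<in>A. p x * Kz l a \<eta> x) + a * P" .
    have "Qf l a \<eta> * P - 2 * (\<Sum>x\<in>A. p x * Kz l a \<eta> x) + a * P + P * t\<^sup>2 + (1 - P) * (Qf l a \<eta> + t\<^sup>2)
        = Qf l a \<eta> - 2 * (\<Sum>x\<in>A. p x * Kz l a \<eta> x) + a * P + t\<^sup>2"
      by (simp add: algebra_simps)
    then show ?thesis by (simp only: e)
  qed
  also have "\<dots> \<le> (Qf l a \<eta> - 2 * sum_mset (image_mset (Im l a) \<eta>) + a + t\<^sup>2) / (2 * t)"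
  proof (intro divide_right_mono)
    have "sum_mset (image_mset (Im l a) \<eta>) \<le> (\<Sum>x\<in>A. p x * Kz l a \<eta> x)"
      unfolding A_def p_def by (rule geo_sum[OF sub])
    moreover have "a * P \<le> a" using P1 par by simp
    ultimately show "Qf l a \<eta> - 2 * (\<Sum>x\<in>A. p x * Kz l a \<eta> x) + a * P + t\<^sup>2 \<le> Qf l a \<eta> - 2 * sum_mset (image_mset (Im l a) \<eta>) + a + t\<^sup>2"
      by simp
  qed (use t in simp)
  finally show ?thesis .
qed

end

lemma poisson_sums:
  fixes \<mu> :: real
  shows "(\<lambda>n. exp (-\<mu>) * \<mu> ^ n / fact n) sums 1"
    and "(\<lambda>n. real n * (exp (-\<mu>) * \<mu> ^ n / fact n)) sums \<mu>"
    and "(\<lambda>n. (real n)\<^sup>2 * (exp (-\<mu>) * \<mu> ^ n / fact n)) sums (\<mu> + \<mu>\<^sup>2)"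
proof -
  define e where "e n = \<mu> ^ n / fact n" for n
  have ee: "e = (\<lambda>n. inverse (fact n) * \<mu> ^ n)" by (rule ext) (simp add: e_def divide_inverse mult.commute)
  have E: "e sums exp \<mu>" using exp_converges[of \<mu>] unfolding ee by (simp add: scaleR_conv_of_real)
  have gS: "real (Suc m) * e (Suc m) = \<mu> * e m" for m
  proof -
    have f: "(fact (Suc m) :: real) = real (Suc m) * fact m" by (simp only: fact_Suc of_nat_mult)
    have "e (Suc m) = (\<mu> * \<mu> ^ m) / (real (Suc m) * fact m)" unfolding e_def f by simp
    then have "real (Suc m) * e (Suc m) = (\<mu> * \<mu> ^ m) / fact m"
      by (simp del: of_nat_Suc)
    then show ?thesis using e_def[of m] by (simp del: of_nat_Suc)
  qed
  have G: "(\<lambda>n. real n * e n) sums (\<mu> * exp \<mu>)"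
  proof -
    have "(\<lambda>m. real (Suc m) * e (Suc m)) sums (\<mu> * exp \<mu>)"
      unfolding gS by (rule sums_mult[OF E])
    then show ?thesis by (subst (asm) sums_Suc_iff) simp
  qed
  have hS: "(real (Suc m))\<^sup>2 * e (Suc m) = \<mu> * (real m * e m + e m)" for m
  proof -
    have "(real (Suc m))\<^sup>2 * e (Suc m) = real (Suc m) * (real (Suc m) * e (Suc m))" by (simp add: power2_eq_square)
    also have "\<dots> = real (Suc m) * (\<mu> * e m)" by (simp only: gS)
    finally show ?thesis by (simp add: algebra_simps)
  qed
  have H: "(\<lambda>n. (real n)\<^sup>2 * e n) sums (\<mu> * (\<mu> * exp \<mu> + exp \<mu>))"
  proof -
    have "(\<lambda>m. (real (Suc m))\<^sup>2 * e (Suc m)) sums (\<mu> * (\<mu> * exp \<mu> + exp \<mu>))"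
      unfolding hS by (rule sums_mult[OF sums_add[OF G E]])
    then show ?thesis by (subst (asm) sums_Suc_iff) simp
  qed
  show "(\<lambda>n. exp (-\<mu>) * \<mu> ^ n / fact n) sums 1"
    using sums_mult[OF E, of "exp (-\<mu>)"] by (simp add: e_def exp_minus field_simps)
  show "(\<lambda>n. real n * (exp (-\<mu>) * \<mu> ^ n / fact n)) sums \<mu>"
    using sums_mult[OF G, of "exp (-\<mu>)"] by (simp add: e_def exp_minus field_simps)
  show "(\<lambda>n. (real n)\<^sup>2 * (exp (-\<mu>) * \<mu> ^ n / fact n)) sums (\<mu> + \<mu>\<^sup>2)"
  proof -
    have v: "exp (-\<mu>) * (\<mu> * (\<mu> * exp \<mu> + exp \<mu>)) = \<mu> + \<mu>\<^sup>2"
      by (simp add: exp_minus power2_eq_square field_simps)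
    have f: "(\<lambda>n. exp (-\<mu>) * ((real n)\<^sup>2 * e n)) = (\<lambda>n. (real n)\<^sup>2 * (exp (-\<mu>) * \<mu> ^ n / fact n))"
      by (rule ext) (simp add: e_def)
    show ?thesis using sums_mult[OF H, of "exp (-\<mu>)"] unfolding v f .
  qed
qed

lemma moments:
  fixes G :: "real measure"
  assumes P: "prob_space G" and sG: "sets G = sets borel" and nn: "AE s in G. 0 \<le> s"
    and s2: "(\<integral>\<^sup>+ s. ennreal (s ^ 2) \<partial>G) < \<infinity>"
  shows "integrable G (\<lambda>s. s)" "(\<integral>\<^sup>+ s. ennreal s \<partial>G) = ennreal (\<integral>s. s \<partial>G)"
    "(\<integral>\<^sup>+ s. ennreal (s ^ 2) \<partial>G) = ennreal (enn2real (\<integral>\<^sup>+ s. ennreal (s ^ 2) \<partial>G))"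
    "0 \<le> (\<integral>s. s \<partial>G)"
proof -
  interpret prob_space G by (rule P)
  have [measurable_cong]: "sets G = sets borel" by (rule sG)
  have "(\<integral>\<^sup>+ s. ennreal (norm s) \<partial>G) \<le> (\<integral>\<^sup>+ s. 1 + ennreal (s ^ 2) \<partial>G)"
  proof (intro nn_integral_mono)
    fix s :: real
    have "norm s \<le> 1 + s ^ 2"
    proof (cases "\<bar>s\<bar> \<le> 1")
      case True
      have h: "0 \<le> s\<^sup>2" by simp
      show ?thesis unfolding real_norm_def using True h by linarith
    next
      case False
      have "\<bar>s\<bar> * 1 \<le> \<bar>s\<bar> * \<bar>s\<bar>" using False by (intro mult_left_mono) auto
      also have "\<bar>s\<bar> * \<bar>s\<bar> = s\<^sup>2" by (simp add: power2_eq_square abs_mult[symmetric])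
      finally show ?thesis by simp
    qed
    then show "ennreal (norm s) \<le> 1 + ennreal (s ^ 2)"
      by (metis ennreal_1 ennreal_leI ennreal_plus zero_le_one zero_le_power2)
  qed
  also have "\<dots> = 1 + (\<integral>\<^sup>+ s. ennreal (s ^ 2) \<partial>G)"
    by (subst nn_integral_add) (auto simp: emeasure_space_1)
  also have "\<dots> < \<infinity>" using s2 by (simp add: ennreal_add_eq_top less_top)
  finally have fin: "(\<integral>\<^sup>+ s. ennreal (norm s) \<partial>G) < \<infinity>" .
  show I: "integrable G (\<lambda>s. s)" by (rule integrableI_bounded) (use fin in auto)
  show "(\<integral>\<^sup>+ s. ennreal s \<partial>G) = ennreal (\<integral>s. s \<partial>G)"
    by (rule nn_integral_eq_integral[OF I nn])
  show "(\<integral>\<^sup>+ s. ennreal (s ^ 2) \<partial>G) = ennreal (enn2real (\<integral>\<^sup>+ s. ennreal (s ^ 2) \<partial>G))"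
    using s2 by simp
  show "0 \<le> (\<integral>s. s \<partial>G)" by (rule integral_nonneg_AE[OF nn])
qed

lemma arr_sum:
  fixes G :: "real measure"
  assumes P: "prob_space G" and sG: "sets G = sets borel" and nn: "AE s in G. 0 \<le> s"
    and s2: "(\<integral>\<^sup>+ s. ennreal (s ^ 2) \<partial>G) < \<infinity>"
    and lam: "0 \<le> lam" and coef: "0 \<le> A" "0 \<le> B" "0 \<le> D"
  shows "(\<Sum>n. arrival_prob lam G n * ennreal (A + B * real n + D * (real n)\<^sup>2))
       = ennreal (A + B * (lam * (\<integral>s. s \<partial>G)) + D * (lam * (\<integral>s. s \<partial>G) + lam\<^sup>2 * enn2real (\<integral>\<^sup>+ s. ennreal (s ^ 2) \<partial>G)))"
proof -
  interpret prob_space G by (rule P)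
  have [measurable_cong]: "sets G = sets borel" by (rule sG)
  define p where "p n s = exp (- lam * s) * (lam * s) ^ n / fact n" for n s
  define c where "c n = A + B * real n + D * (real n)\<^sup>2" for n :: nat
  have c0: "0 \<le> c n" for n using coef by (simp add: c_def)
  have "(\<Sum>n. arrival_prob lam G n * ennreal (c n)) = (\<Sum>n. \<integral>\<^sup>+ s. ennreal (p n s * c n) \<partial>G)"
  proof (intro suminf_cong)
    fix n
    have "arrival_prob lam G n * ennreal (c n) = (\<integral>\<^sup>+ s. ennreal (p n s) * ennreal (c n) \<partial>G)"
      unfolding arrival_prob_def p_def by (rule nn_integral_multc[symmetric]) measurable
    also have "\<dots> = (\<integral>\<^sup>+ s. ennreal (p n s * c n) \<partial>G)"
      by (intro nn_integral_cong) (use ennreal_mult'[OF c0[of n], of "p n s" for s] in \<open>simp add: mult.commute\<close>)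
    finally show "arrival_prob lam G n * ennreal (c n) = (\<integral>\<^sup>+ s. ennreal (p n s * c n) \<partial>G)" .
  qed
  also have "\<dots> = (\<integral>\<^sup>+ s. (\<Sum>n. ennreal (p n s * c n)) \<partial>G)"
    by (rule nn_integral_suminf[symmetric]) (unfold p_def c_def, measurable)
  also have "\<dots> = (\<integral>\<^sup>+ s. ennreal A + ennreal ((B * lam + D * lam) * s) + ennreal ((D * lam\<^sup>2) * s ^ 2) \<partial>G)"
  proof (rule nn_integral_cong_AE)
    show "AE s in G. (\<Sum>n. ennreal (p n s * c n)) = ennreal A + ennreal ((B * lam + D * lam) * s) + ennreal ((D * lam\<^sup>2) * s ^ 2)"
      using nn
    proof (eventually_elim)
      case (elim s)
      define \<mu> where "\<mu> = lam * s"
      have \<mu>0: "0 \<le> \<mu>" using elim lam by (simp add: \<mu>_def)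
      have pe: "p n s = exp (-\<mu>) * \<mu> ^ n / fact n" for n by (simp add: p_def \<mu>_def)
      have S: "(\<lambda>n. p n s * c n) sums (A * 1 + B * \<mu> + D * (\<mu> + \<mu>\<^sup>2))"
      proof -
        have "(\<lambda>n. A * (exp (-\<mu>) * \<mu> ^ n / fact n) + B * (real n * (exp (-\<mu>) * \<mu> ^ n / fact n))
                 + D * ((real n)\<^sup>2 * (exp (-\<mu>) * \<mu> ^ n / fact n))) sums (A * 1 + B * \<mu> + D * (\<mu> + \<mu>\<^sup>2))"
          by (intro sums_add sums_mult poisson_sums)
        moreover have "(\<lambda>n. A * (exp (-\<mu>) * \<mu> ^ n / fact n) + B * (real n * (exp (-\<mu>) * \<mu> ^ n / fact n))
                 + D * ((real n)\<^sup>2 * (exp (-\<mu>) * \<mu> ^ n / fact n))) = (\<lambda>n. p n s * c n)"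
          by (rule ext) (simp add: pe c_def algebra_simps)
        ultimately show ?thesis by simp
      qed
      have nnp: "0 \<le> p n s * c n" for n unfolding pe using \<mu>0 c0[of n] by simp
      have "(\<Sum>n. ennreal (p n s * c n)) = ennreal (\<Sum>n. p n s * c n)"
        by (rule suminf_ennreal2[OF nnp]) (use S in \<open>simp add: sums_iff\<close>)
      also have "(\<Sum>n. p n s * c n) = A + (B * lam + D * lam) * s + (D * lam\<^sup>2) * s ^ 2"
        using sums_unique[OF S] by (simp add: \<mu>_def algebra_simps power2_eq_square)
      also have "ennreal (A + (B * lam + D * lam) * s + (D * lam\<^sup>2) * s ^ 2) = ennreal A + ennreal ((B * lam + D * lam) * s) + ennreal ((D * lam\<^sup>2) * s ^ 2)"
        using coef lam elim by (simp add: ennreal_plus)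
      finally show ?case .
    qed
  qed
  also have "\<dots> = ennreal A + ennreal (B * lam + D * lam) * (\<integral>\<^sup>+ s. ennreal s \<partial>G) + ennreal (D * lam\<^sup>2) * (\<integral>\<^sup>+ s. ennreal (s ^ 2) \<partial>G)"
  proof -
    have "(\<integral>\<^sup>+ s. ennreal A + ennreal ((B * lam + D * lam) * s) + ennreal ((D * lam\<^sup>2) * s ^ 2) \<partial>G)
        = (\<integral>\<^sup>+ s. ennreal A + ennreal ((B * lam + D * lam) * s) \<partial>G) + (\<integral>\<^sup>+ s. ennreal ((D * lam\<^sup>2) * s ^ 2) \<partial>G)"
      by (rule nn_integral_add) auto
    also have "(\<integral>\<^sup>+ s. ennreal A + ennreal ((B * lam + D * lam) * s) \<partial>G) = (\<integral>\<^sup>+ s. ennreal A \<partial>G) + (\<integral>\<^sup>+ s. ennreal ((B * lam + D * lam) * s) \<partial>G)"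
      by (rule nn_integral_add) auto
    also have "(\<integral>\<^sup>+ s. ennreal A \<partial>G) = ennreal A" by (simp add: emeasure_space_1)
    also have "(\<integral>\<^sup>+ s. ennreal ((B * lam + D * lam) * s) \<partial>G) = (\<integral>\<^sup>+ s. ennreal (B * lam + D * lam) * ennreal s \<partial>G)"
      by (rule nn_integral_cong_AE) (use nn in \<open>auto simp: ennreal_mult coef lam\<close>)
    also have "\<dots> = ennreal (B * lam + D * lam) * (\<integral>\<^sup>+ s. ennreal s \<partial>G)"
      by (rule nn_integral_cmult) measurable
    also have "(\<integral>\<^sup>+ s. ennreal ((D * lam\<^sup>2) * s ^ 2) \<partial>G) = (\<integral>\<^sup>+ s. ennreal (D * lam\<^sup>2) * ennreal (s ^ 2) \<partial>G)"
      by (rule nn_integral_cong) (auto simp: ennreal_mult coef lam)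
    also have "\<dots> = ennreal (D * lam\<^sup>2) * (\<integral>\<^sup>+ s. ennreal (s ^ 2) \<partial>G)"
      by (rule nn_integral_cmult) measurable
    finally show ?thesis .
  qed
  also have "\<dots> = ennreal A + ennreal (B * lam + D * lam) * ennreal (\<integral>s. s \<partial>G) + ennreal (D * lam\<^sup>2) * ennreal (enn2real (\<integral>\<^sup>+ s. ennreal (s ^ 2) \<partial>G))"
    using moments[OF P sG nn s2] by simp
  also have "\<dots> = ennreal (A + B * (lam * (\<integral>s. s \<partial>G)) + D * (lam * (\<integral>s. s \<partial>G) + lam\<^sup>2 * enn2real (\<integral>\<^sup>+ s. ennreal (s ^ 2) \<partial>G)))"
  proof -
    have i0: "0 \<le> (\<integral>s. s \<partial>G)" using moments(4)[OF P sG nn s2] .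
    have j0: "0 \<le> enn2real (\<integral>\<^sup>+ s. ennreal (s ^ 2) \<partial>G)" by simp
    have "ennreal A + ennreal (B * lam + D * lam) * ennreal (\<integral>s. s \<partial>G) + ennreal (D * lam\<^sup>2) * ennreal (enn2real (\<integral>\<^sup>+ s. ennreal (s ^ 2) \<partial>G))
        = ennreal (A + (B * lam + D * lam) * (\<integral>s. s \<partial>G) + (D * lam\<^sup>2) * enn2real (\<integral>\<^sup>+ s. ennreal (s ^ 2) \<partial>G))"
      using coef lam i0 j0 by (simp add: ennreal_mult ennreal_plus)
    also have "A + (B * lam + D * lam) * (\<integral>s. s \<partial>G) + (D * lam\<^sup>2) * enn2real (\<integral>\<^sup>+ s. ennreal (s ^ 2) \<partial>G)
        = A + B * (lam * (\<integral>s. s \<partial>G)) + D * (lam * (\<integral>s. s \<partial>G) + lam\<^sup>2 * enn2real (\<integral>\<^sup>+ s. ennreal (s ^ 2) \<partial>G))"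
      by (simp add: algebra_simps)
    finally show ?thesis .
  qed
  finally show ?thesis by (simp add: c_def)
qed

lemma Kz_meas[measurable]: "(\<lambda>u. Kz l a \<zeta> u) \<in> borel_measurable borel"
proof (induction \<zeta>)
  case empty then show ?case by (simp add: Kz_def)
next
  case (add x \<zeta>)
  have e: "(\<lambda>u. Kz l a (add_mset x \<zeta>) u) = (\<lambda>u. Kf l a u x + Kz l a \<zeta> u)"
    by (rule ext) (simp add: Kz_def)
  show ?case unfolding e using add by measurable
qed

context
  fixes l r a :: real
  assumes par: "0 < r" "0 < a" "a \<le> l / 2" "a \<le> 2 * r"
begin

lemma Kz_int:
  assumes "set_mset \<zeta> \<subseteq> {0..<l}"
  shows "(\<integral>\<^sup>+u. ennreal (Kz l a \<zeta> u) \<partial>unif l) = ennreal (sum_mset (image_mset (Im l a) \<zeta>))"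
  using assms
proof (induction \<zeta>)
  case empty then show ?case by (simp add: Kz_def)
next
  case (add x \<zeta>)
  have xb: "0 \<le> x" "x < l" using add.prems by auto
  have "(\<integral>\<^sup>+u. ennreal (Kz l a (add_mset x \<zeta>) u) \<partial>unif l) = (\<integral>\<^sup>+u. ennreal (Kf l a u x) + ennreal (Kz l a \<zeta> u) \<partial>unif l)"
    by (intro nn_integral_cong) (simp add: Kz_def ennreal_plus Kf_nonneg Kz_nonneg[unfolded Kz_def])
  also have "\<dots> = (\<integral>\<^sup>+u. ennreal (Kf l a u x) \<partial>unif l) + (\<integral>\<^sup>+u. ennreal (Kz l a \<zeta> u) \<partial>unif l)"
    by (rule nn_integral_add) (simp_all add: measurable_cong_sets[OF sets_unif[OF par] refl])
  also have "\<dots> = ennreal (Im l a x) + ennreal (sum_mset (image_mset (Im l a) \<zeta>))"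
    using Im_int(1)[OF par xb] add by simp
  also have "\<dots> = ennreal (Im l a x + sum_mset (image_mset (Im l a) \<zeta>))"
  proof (rule ennreal_plus[symmetric])
    show "0 \<le> Im l a x" using Im_int(4)[OF par xb] .
    have "sum_mset (image_mset (\<lambda>z. 0::real) \<zeta>) \<le> sum_mset (image_mset (Im l a) \<zeta>)"
      by (rule sum_mset_mono) (use Im_int(4)[OF par] add.prems in auto)
    then show "0 \<le> sum_mset (image_mset (Im l a) \<zeta>)" by simp
  qed
  finally show ?case by simp
qed

lemma Im_sum_bounds:
  assumes "set_mset \<zeta> \<subseteq> {0..<l}"
  shows "a\<^sup>2 / (4 * l) * real (size \<zeta>) \<le> sum_mset (image_mset (Im l a) \<zeta>)"
    "sum_mset (image_mset (Im l a) \<zeta>) \<le> a * real (size \<zeta>)"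
proof -
  have "sum_mset (image_mset (\<lambda>z. a\<^sup>2 / (4 * l)) \<zeta>) \<le> sum_mset (image_mset (Im l a) \<zeta>)"
    by (rule sum_mset_mono) (use Im_lower[OF par] assms in auto)
  then show "a\<^sup>2 / (4 * l) * real (size \<zeta>) \<le> sum_mset (image_mset (Im l a) \<zeta>)" by (simp add: mult.commute)
  have "sum_mset (image_mset (Im l a) \<zeta>) \<le> sum_mset (image_mset (\<lambda>z. a) \<zeta>)"
    by (rule sum_mset_mono) (use Im_int(3)[OF par] assms in auto)
  then show "sum_mset (image_mset (Im l a) \<zeta>) \<le> a * real (size \<zeta>)" by (simp add: mult.commute)
qed

lemma Im_sum_nonneg: "set_mset \<zeta> \<subseteq> {0..<l} \<Longrightarrow> 0 \<le> sum_mset (image_mset (Im l a) \<zeta>)"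
  using Im_sum_bounds(1)[of \<zeta>] l0[OF par] by (smt (verit) divide_nonneg_pos mult_nonneg_nonneg of_nat_0_le_iff zero_le_power2)

lemma pim_facts:
  fixes n :: nat
  shows "prob_space (PiM {..<n} (\<lambda>_. unif l))"
    "AE y in PiM {..<n} (\<lambda>_. unif l). \<forall>i\<in>{..<n}. y i \<in> {0..<l}"
    "\<And>f i. f \<in> borel_measurable borel \<Longrightarrow> i < n \<Longrightarrow>
        (\<integral>\<^sup>+y. f (y i) \<partial>PiM {..<n} (\<lambda>_. unif l)) = (\<integral>\<^sup>+u. f u \<partial>unif l)"
proof -
  interpret P: product_prob_space "\<lambda>_. unif l" "{..<n}"
    by (intro product_prob_spaceI unif_prob[OF par])
  show "prob_space (PiM {..<n} (\<lambda>_. unif l))" by (rule P.P.prob_space_axioms)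
  have comp: "distr (PiM {..<n} (\<lambda>_. unif l)) (unif l) (\<lambda>\<omega>. \<omega> i) = unif l" if "i < n" for i
    using P.PiM_component[of i] that by simp
  show "AE y in PiM {..<n} (\<lambda>_. unif l). \<forall>i\<in>{..<n}. y i \<in> {0..<l}"
  proof (rule AE_finite_allI)
    fix i assume i: "i \<in> {..<n}"
    have "AE u in unif l. u \<in> {0..<l}" unfolding unif_def by (rule AE_uniform_measureI) auto
    moreover have ii: "i < n" using i by simp
    ultimately have "AE u in distr (PiM {..<n} (\<lambda>_. unif l)) (unif l) (\<lambda>\<omega>. \<omega> i). u \<in> {0..<l}"
      by (subst comp[OF ii])
    then show "AE y in PiM {..<n} (\<lambda>_. unif l). y i \<in> {0..<l}"
      by (rule AE_distrD[rotated]) (use i in simp)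
  qed simp
  fix f :: "real \<Rightarrow> ennreal" and i :: nat
  assume f[measurable]: "f \<in> borel_measurable borel" and i: "i < n"
  have "(\<integral>\<^sup>+u. f u \<partial>unif l) = (\<integral>\<^sup>+u. f u \<partial>distr (PiM {..<n} (\<lambda>_. unif l)) (unif l) (\<lambda>\<omega>. \<omega> i))"
    using comp i by simp
  also have "\<dots> = (\<integral>\<^sup>+y. f (y i) \<partial>PiM {..<n} (\<lambda>_. unif l))"
  proof -
    have fm: "f \<in> borel_measurable (unif l)"
      by (subst measurable_cong_sets[OF sets_unif[OF par] refl]) (rule f)
    have gm: "(\<lambda>\<omega>. \<omega> i) \<in> measurable (PiM {..<n} (\<lambda>_. unif l)) (unif l)"
      using i by (intro measurable_component_singleton) simp
    show ?thesis by (rule nn_integral_distr[OF gm]) (subst measurable_distr_eq1, rule fm)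
  qed
  finally show "(\<integral>\<^sup>+y. f (y i) \<partial>PiM {..<n} (\<lambda>_. unif l)) = (\<integral>\<^sup>+u. f u \<partial>unif l)" by simp
qed

end

lemma sum_mset_arr: "sum_mset (image_mset f (mset (map y [0..<n]))) = (\<Sum>i<n. f (y i) :: real)"
proof -
  have "image_mset f (mset (map y [0..<n])) = mset (map (f \<circ> y) [0..<n])"
    by (simp only: mset_map[symmetric] map_map)
  then have "sum_mset (image_mset f (mset (map y [0..<n]))) = sum_list (map (f \<circ> y) [0..<n])"
    by (simp only: sum_mset_sum_list)
  also have "\<dots> = sum (f \<circ> y) (set [0..<n])" by (rule interv_sum_list_conv_sum_set_nat)
  also have "set [0..<n] = {..<n}" by auto
  finally show ?thesis by simp
qed

context
  fixes l r a :: real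
  assumes par: "0 < r" "0 < a" "a \<le> l / 2" "a \<le> 2 * r"
begin

lemma pointwise_bound:
  assumes \<zeta>: "set_mset \<zeta> \<subseteq> {0..<l}" and y: "\<forall>i\<in>{..<n}. y i \<in> {0..<l}" and t: "0 < t"
  shows "serve_exp l r (a_norm l a) (\<zeta> + mset (map y [0..<n]))
     \<le> (Qf l a \<zeta> - 2 * sum_mset (image_mset (Im l a) \<zeta>) + a + t\<^sup>2) / (2 * t) + a / (2 * t) * (real n)\<^sup>2
        + (1 / t) * (\<Sum>i<n. Kz l a \<zeta> (y i))"
proof -
  define arr where "arr = mset (map y [0..<n])"
  have arrs: "set_mset arr \<subseteq> {0..<l}" using y by (auto simp: arr_def)
  have sub: "set_mset (\<zeta> + arr) \<subseteq> {0..<l}" using \<zeta> arrs by auto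
  have "serve_exp l r (a_norm l a) (\<zeta> + arr) \<le> (Qf l a (\<zeta> + arr) - 2 * sum_mset (image_mset (Im l a) (\<zeta> + arr)) + a + t\<^sup>2) / (2 * t)"
    by (rule serve_bound[OF par sub t])
  also have "\<dots> \<le> (Qf l a \<zeta> - 2 * sum_mset (image_mset (Im l a) \<zeta>) + a + t\<^sup>2 + a * (real n)\<^sup>2 + 2 * (\<Sum>i<n. Kz l a \<zeta> (y i))) / (2 * t)"
  proof (intro divide_right_mono)
    have "Qf l a (\<zeta> + arr) = Qf l a \<zeta> + 2 * Bf l a \<zeta> arr + Qf l a arr" by (rule Qf_add)
    moreover have "Bf l a \<zeta> arr = (\<Sum>i<n. Kz l a \<zeta> (y i))"
    proof -
      have "Bf l a arr \<zeta> = (\<Sum>i<n. Kz l a \<zeta> (y i))" unfolding Bf_def arr_def by (rule sum_mset_arr)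
      then show ?thesis using Bf_sym[of l a \<zeta> arr] by simp
    qed
    moreover have "Qf l a arr \<le> a * (real n)\<^sup>2"
      using Bf_le[OF arrs arrs par(2)] by (simp add: Qf_def arr_def power2_eq_square mult.assoc)
    moreover have "sum_mset (image_mset (Im l a) (\<zeta> + arr)) = sum_mset (image_mset (Im l a) \<zeta>) + sum_mset (image_mset (Im l a) arr)"
      by simp
    moreover have "0 \<le> sum_mset (image_mset (Im l a) arr)" by (rule Im_sum_nonneg[OF par arrs])
    ultimately show "Qf l a (\<zeta> + arr) - 2 * sum_mset (image_mset (Im l a) (\<zeta> + arr)) + a + t\<^sup>2
        \<le> Qf l a \<zeta> - 2 * sum_mset (image_mset (Im l a) \<zeta>) + a + t\<^sup>2 + a * (real n)\<^sup>2 + 2 * (\<Sum>i<n. Kz l a \<zeta> (y i))"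
      by linarith
  qed (use t in simp)
  also have "\<dots> = (Qf l a \<zeta> - 2 * sum_mset (image_mset (Im l a) \<zeta>) + a + t\<^sup>2) / (2 * t) + a / (2 * t) * (real n)\<^sup>2
        + (1 / t) * (\<Sum>i<n. Kz l a \<zeta> (y i))"
    using t by (simp add: field_simps)
  finally show ?thesis by (simp add: arr_def)
qed

lemma pim_bound:
  assumes \<zeta>: "set_mset \<zeta> \<subseteq> {0..<l}" and t: "0 < t"
    and C0: "0 \<le> Qf l a \<zeta> - 2 * sum_mset (image_mset (Im l a) \<zeta>) + a + t\<^sup>2"
  shows "(\<integral>\<^sup>+ y. ennreal (serve_exp l r (a_norm l a) (\<zeta> + mset (map y [0..<n]))) \<partial>PiM {..<n} (\<lambda>_. unif l))
      \<le> ennreal ((Qf l a \<zeta> - 2 * sum_mset (image_mset (Im l a) \<zeta>) + a + t\<^sup>2) / (2 * t)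
          + (sum_mset (image_mset (Im l a) \<zeta>) / t) * real n + a / (2 * t) * (real n)\<^sup>2)"
proof -
  define C where "C = (Qf l a \<zeta> - 2 * sum_mset (image_mset (Im l a) \<zeta>) + a + t\<^sup>2) / (2 * t)"
  define S where "S = sum_mset (image_mset (Im l a) \<zeta>)"
  have Cn: "0 \<le> C" using C0 t by (simp add: C_def)
  have Sn: "0 \<le> S" using Im_sum_nonneg[OF par \<zeta>] by (simp add: S_def)
  have P: "prob_space (PiM {..<n} (\<lambda>_. unif l))" by (rule pim_facts(1)[OF par])
  interpret P: prob_space "PiM {..<n} (\<lambda>_. unif l)" by (rule P)
  have [measurable_cong]: "sets (unif l) = sets borel" by (rule sets_unif[OF par])
  have "(\<integral>\<^sup>+ y. ennreal (serve_exp l r (a_norm l a) (\<zeta> + mset (map y [0..<n]))) \<partial>PiM {..<n} (\<lambda>_. unif l))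
     \<le> (\<integral>\<^sup>+ y. ennreal (C + a / (2 * t) * (real n)\<^sup>2) + (\<Sum>i<n. ennreal ((1 / t) * Kz l a \<zeta> (y i))) \<partial>PiM {..<n} (\<lambda>_. unif l))"
  proof (rule nn_integral_mono_AE)
    show "AE y in PiM {..<n} (\<lambda>_. unif l). ennreal (serve_exp l r (a_norm l a) (\<zeta> + mset (map y [0..<n])))
       \<le> ennreal (C + a / (2 * t) * (real n)\<^sup>2) + (\<Sum>i<n. ennreal ((1 / t) * Kz l a \<zeta> (y i)))"
      using pim_facts(2)[OF par, of n]
    proof (eventually_elim)
      case (elim y)
      have "serve_exp l r (a_norm l a) (\<zeta> + mset (map y [0..<n])) \<le> C + a / (2 * t) * (real n)\<^sup>2 + (\<Sum>i<n. (1 / t) * Kz l a \<zeta> (y i))"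
        using pointwise_bound[OF \<zeta> elim t] by (simp add: C_def sum_distrib_left)
      then have "ennreal (serve_exp l r (a_norm l a) (\<zeta> + mset (map y [0..<n]))) \<le> ennreal (C + a / (2 * t) * (real n)\<^sup>2 + (\<Sum>i<n. (1 / t) * Kz l a \<zeta> (y i)))"
        by (rule ennreal_leI)
      also have "\<dots> = ennreal (C + a / (2 * t) * (real n)\<^sup>2) + ennreal (\<Sum>i<n. (1 / t) * Kz l a \<zeta> (y i))"
        by (rule ennreal_plus) (use Cn par t in \<open>auto intro!: sum_nonneg simp: Kz_nonneg\<close>)
      also have "ennreal (\<Sum>i<n. (1 / t) * Kz l a \<zeta> (y i)) = (\<Sum>i<n. ennreal ((1 / t) * Kz l a \<zeta> (y i)))"
        by (rule sum_ennreal[symmetric]) (use t in \<open>simp add: Kz_nonneg\<close>)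
      finally show ?case .
    qed
  qed
  also have "\<dots> = (\<integral>\<^sup>+ y. ennreal (C + a / (2 * t) * (real n)\<^sup>2) \<partial>PiM {..<n} (\<lambda>_. unif l))
        + (\<integral>\<^sup>+ y. (\<Sum>i<n. ennreal ((1 / t) * Kz l a \<zeta> (y i))) \<partial>PiM {..<n} (\<lambda>_. unif l))"
    by (rule nn_integral_add) measurable
  also have "(\<integral>\<^sup>+ y. ennreal (C + a / (2 * t) * (real n)\<^sup>2) \<partial>PiM {..<n} (\<lambda>_. unif l)) = ennreal (C + a / (2 * t) * (real n)\<^sup>2)"
    by (simp add: P.emeasure_space_1)
  also have "(\<integral>\<^sup>+ y. (\<Sum>i<n. ennreal ((1 / t) * Kz l a \<zeta> (y i))) \<partial>PiM {..<n} (\<lambda>_. unif l))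
      = (\<Sum>i<n. (\<integral>\<^sup>+ y. ennreal ((1 / t) * Kz l a \<zeta> (y i)) \<partial>PiM {..<n} (\<lambda>_. unif l)))"
    by (rule nn_integral_sum) measurable
  also have "\<dots> = (\<Sum>i<n. ennreal (S / t))"
  proof (rule sum.cong[OF refl])
    fix i assume i: "i \<in> {..<n}"
    have "(\<integral>\<^sup>+ y. ennreal ((1 / t) * Kz l a \<zeta> (y i)) \<partial>PiM {..<n} (\<lambda>_. unif l))
        = (\<integral>\<^sup>+ u. ennreal ((1 / t) * Kz l a \<zeta> u) \<partial>unif l)"
      by (rule pim_facts(3)[OF par, of "\<lambda>u. ennreal ((1 / t) * Kz l a \<zeta> u)"]) (use i in auto)
    also have "\<dots> = (\<integral>\<^sup>+ u. ennreal (1 / t) * ennreal (Kz l a \<zeta> u) \<partial>unif l)"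
    proof (intro nn_integral_cong)
      fix u
      have "ennreal ((1 / t) * Kz l a \<zeta> u) = ennreal (1 / t) * ennreal (Kz l a \<zeta> u)"
        by (rule ennreal_mult) (use t in \<open>auto simp: Kz_nonneg\<close>)
      then show "ennreal ((1 / t) * Kz l a \<zeta> u) = ennreal (1 / t) * ennreal (Kz l a \<zeta> u)" .
    qed
    also have "\<dots> = ennreal (1 / t) * (\<integral>\<^sup>+ u. ennreal (Kz l a \<zeta> u) \<partial>unif l)"
      by (rule nn_integral_cmult) (subst measurable_cong_sets[OF sets_unif[OF par] refl], measurable)
    also have "\<dots> = ennreal (1 / t) * ennreal S" using Kz_int[OF par \<zeta>] by (simp add: S_def)
    also have "\<dots> = ennreal (S / t)" using t Sn by (simp add: ennreal_mult[symmetric])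
    finally show "(\<integral>\<^sup>+ y. ennreal ((1 / t) * Kz l a \<zeta> (y i)) \<partial>PiM {..<n} (\<lambda>_. unif l)) = ennreal (S / t)" .
  qed
  also have "(\<Sum>i<n. ennreal (S / t)) = ennreal (S / t * real n)"
  proof -
    have "(\<Sum>i<n. ennreal (S / t)) = ennreal (\<Sum>i<n. S / t)"
      by (rule sum_ennreal) (use t Sn in simp)
    also have "(\<Sum>i<n. S / t) = S / t * real n" by simp
    finally show ?thesis .
  qed
  also have "ennreal (C + a / (2 * t) * (real n)\<^sup>2) + ennreal (S / t * real n) = ennreal (C + S / t * real n + a / (2 * t) * (real n)\<^sup>2)"
  proof -
    have "ennreal (C + a / (2 * t) * (real n)\<^sup>2) + ennreal (S / t * real n) = ennreal (C + a / (2 * t) * (real n)\<^sup>2 + S / t * real n)"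
      by (rule ennreal_plus[symmetric]) (use Cn Sn t par in auto)
    also have "C + a / (2 * t) * (real n)\<^sup>2 + S / t * real n = C + S / t * real n + a / (2 * t) * (real n)\<^sup>2" by simp
    finally show ?thesis .
  qed
  finally show ?thesis by (simp add: C_def S_def)
qed

end

context
  fixes l r a :: real
  assumes par: "0 < r" "0 < a" "a \<le> l / 2" "a \<le> 2 * r"
begin

lemma step_bound:
  fixes G :: "real measure"
  assumes P: "prob_space G" and sG: "sets G = sets borel" and nn: "AE s in G. 0 \<le> s"
    and s2: "(\<integral>\<^sup>+ s. ennreal (s ^ 2) \<partial>G) < \<infinity>" and lam: "0 \<le> lam"
    and \<zeta>: "set_mset \<zeta> \<subseteq> {0..<l}" and t: "0 < t"
    and C0: "0 \<le> Qf l a \<zeta> - 2 * sum_mset (image_mset (Im l a) \<zeta>) + a + t\<^sup>2"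
  shows "step_exp l r lam G (a_norm l a) \<zeta>
     \<le> ennreal ((Qf l a \<zeta> - 2 * sum_mset (image_mset (Im l a) \<zeta>) + a + t\<^sup>2) / (2 * t)
          + (sum_mset (image_mset (Im l a) \<zeta>) / t) * (lam * (\<integral>s. s \<partial>G))
          + a / (2 * t) * (lam * (\<integral>s. s \<partial>G) + lam\<^sup>2 * enn2real (\<integral>\<^sup>+ s. ennreal (s ^ 2) \<partial>G)))"
proof -
  define A where "A = (Qf l a \<zeta> - 2 * sum_mset (image_mset (Im l a) \<zeta>) + a + t\<^sup>2) / (2 * t)"
  define B where "B = sum_mset (image_mset (Im l a) \<zeta>) / t"
  define D where "D = a / (2 * t)"
  have A0: "0 \<le> A" using C0 t by (simp add: A_def)
  have B0: "0 \<le> B" using Im_sum_nonneg[OF par \<zeta>] t by (simp add: B_def)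
  have D0: "0 \<le> D" using par t by (simp add: D_def)
  have "step_exp l r lam G (a_norm l a) \<zeta>
      \<le> (\<Sum>n. arrival_prob lam G n * ennreal (A + B * real n + D * (real n)\<^sup>2))"
    unfolding step_exp_def
  proof (rule suminf_le)
    fix n
    show "arrival_prob lam G n *
          (\<integral>\<^sup>+ y. ennreal (serve_exp l r (a_norm l a) (\<zeta> + mset (map y [0..<n]))) \<partial>PiM {..<n} (\<lambda>_. unif l))
        \<le> arrival_prob lam G n * ennreal (A + B * real n + D * (real n)\<^sup>2)"
      using pim_bound[OF par \<zeta> t C0, of n] by (intro mult_left_mono) (simp_all add: A_def B_def D_def)
  qed (rule summableI)+
  also have "\<dots> = ennreal (A + B * (lam * (\<integral>s. s \<partial>G)) + D * (lam * (\<integral>s. s \<partial>G) + lam\<^sup>2 * enn2real (\<integral>\<^sup>+ s. ennreal (s ^ 2) \<partial>G)))"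
    by (rule arr_sum[OF P sG nn s2 lam A0 B0 D0])
  finally show ?thesis by (simp add: A_def B_def D_def)
qed

end

lemma fin_eq:
  fixes t S a M1 M2 :: real
  assumes "0 < t"
  shows "(t\<^sup>2 - 2 * S + a + t\<^sup>2) / (2 * t) + (S / t) * M1 + a / (2 * t) * M2 = t + (a + a * M2 - 2 * (1 - M1) * S) / (2 * t)"
  using assms by (simp add: field_simps power2_eq_square)

lemma fin1:
  fixes t S a M1 c k K0 :: real
  assumes t: "0 < t" "t \<le> sqrt a * k" and S: "c * k \<le> S" and M1: "M1 < 1" and c: "0 < c" and a: "0 < a"
    and k: "1 \<le> k" and K: "K0 \<le> (1 - M1) * c * k"
  shows "t + (K0 - 2 * (1 - M1) * S) / (2 * t) + (1 - M1) * c / (2 * sqrt a) \<le> t"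
proof -
  have m: "0 < 1 - M1" using M1 by simp
  have "K0 - 2 * (1 - M1) * S \<le> K0 - 2 * (1 - M1) * (c * k)"
    using S m by (simp add: mult_left_mono)
  also have "\<dots> \<le> - ((1 - M1) * c * k)"
  proof -
    have "2 * (1 - M1) * (c * k) = 2 * ((1 - M1) * c * k)" by (simp add: algebra_simps)
    then show ?thesis using K by linarith
  qed
  finally have e1: "K0 - 2 * (1 - M1) * S \<le> - ((1 - M1) * c * k)" .
  have e2: "(K0 - 2 * (1 - M1) * S) / (2 * t) \<le> - ((1 - M1) * c * k) / (2 * t)"
    by (rule divide_right_mono[OF e1]) (use t in simp)
  have sa: "0 < sqrt a" using a by simp
  have "(1 - M1) * c / (2 * sqrt a) = (1 - M1) * c * k / (2 * (sqrt a * k))" using k sa by simp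
  also have "\<dots> \<le> (1 - M1) * c * k / (2 * t)"
  proof (rule divide_left_mono)
    show "2 * t \<le> 2 * (sqrt a * k)" using t by simp
    show "0 \<le> (1 - M1) * c * k" using m c k by simp
    show "0 < 2 * (sqrt a * k) * (2 * t)" using t sa k by simp
  qed
  finally have e3: "(1 - M1) * c / (2 * sqrt a) \<le> (1 - M1) * c * k / (2 * t)" .
  have "- ((1 - M1) * c * k) / (2 * t) = - ((1 - M1) * c * k / (2 * t))" by (rule minus_divide_left[symmetric])
  then show ?thesis using e2 e3 by linarith
qed

theorem lemma9:
  fixes l r lam a :: real and G :: "real measure"
  assumes "l > 0" and "r > 0" and "lam > 0"
    and "prob_space G" and "sets G = sets borel" and "AE s in G. 0 \<le> s"
    and "lam * (\<integral>s. s \<partial>G) < 1"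
    and "(\<integral>\<^sup>+ s. ennreal (s ^ 2) \<partial>G) < \<infinity>"
    and "0 < a" and "a \<le> min (l / 2) (2 * r)"
  shows "\<exists>\<alpha>>0. \<exists>b>0. \<exists>n::nat.
           (\<forall>\<zeta>\<in>count_meas l. size \<zeta> > n \<longrightarrow>
              step_exp l r lam G (a_norm l a) \<zeta> + ennreal \<alpha> \<le> ennreal (a_norm l a \<zeta>)) \<and>
           (\<forall>\<zeta>\<in>count_meas l. size \<zeta> \<le> n \<longrightarrow>
              step_exp l r lam G (a_norm l a) \<zeta> \<le> ennreal (a_norm l a \<zeta> + b))"
proof -
  have par: "0 < r" "0 < a" "a \<le> l / 2" "a \<le> 2 * r" using assms by auto
  note G = assms(4,5,6,8)
  have lam0: "0 \<le> lam" using assms(3) by simp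
  define s1 where "s1 = (\<integral>s. s \<partial>G)"
  define s2 where "s2 = enn2real (\<integral>\<^sup>+ s. ennreal (s ^ 2) \<partial>G)"
  define M1 where "M1 = lam * s1"
  define M2 where "M2 = lam * s1 + lam\<^sup>2 * s2"
  have s10: "0 \<le> s1" unfolding s1_def by (rule moments(4)[OF G])
  have s20: "0 \<le> s2" by (simp add: s2_def)
  have M10: "0 \<le> M1" "M1 < 1" using s10 lam0 assms(7) by (simp_all add: M1_def s1_def)
  have M20: "0 \<le> M2" using s10 s20 lam0 by (simp add: M2_def)
  define c where "c = a\<^sup>2 / (4 * l)"
  have c0: "0 < c" using par assms(1) by (simp add: c_def)
  define K0 where "K0 = a + a * M2"
  have K00: "0 \<le> K0" using par M20 by (simp add: K0_def)
  define \<alpha> where "\<alpha> = (1 - M1) * c / (2 * sqrt a)"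
  have \<alpha>0: "0 < \<alpha>" using M10 c0 par by (simp add: \<alpha>_def)
  define n0 where "n0 = nat \<lceil>K0 / ((1 - M1) * c)\<rceil>"
  have n0: "K0 \<le> (1 - M1) * c * real n0"
  proof -
    have "K0 / ((1 - M1) * c) \<le> real n0" unfolding n0_def by linarith
    then show ?thesis using M10 c0 by (simp add: divide_le_eq mult.commute)
  qed
  define b where "b = (1 + a + a * M2) / 2 + K0 / (2 * sqrt a) + 1"
  have b0: "0 < b"
  proof -
    have "0 \<le> K0 / (2 * sqrt a)" using K00 par by simp
    moreover have "0 \<le> a * M2" using par M20 by simp
    moreover have "0 < (1 + a + a * M2) / 2" using par \<open>0 \<le> a * M2\<close> by simp
    ultimately show ?thesis unfolding b_def by (smt (verit))
  qed
  have sub: "set_mset \<zeta> \<subseteq> {0..<l}" if "\<zeta> \<in> count_meas l" for \<zeta>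
    using that by (auto simp: count_meas_def circ_def)
  have key: "step_exp l r lam G (a_norm l a) \<zeta> \<le> ennreal (t + (K0 - 2 * (1 - M1) * sum_mset (image_mset (Im l a) \<zeta>)) / (2 * t))"
    if z: "\<zeta> \<in> count_meas l" and k1: "1 \<le> size \<zeta>" and tdef: "t = a_norm l a \<zeta>" for \<zeta> t
  proof -
    have sz: "set_mset \<zeta> \<subseteq> {0..<l}" by (rule sub[OF z])
    have Qge: "a * real (size \<zeta>) \<le> Qf l a \<zeta>" by (rule Qf_ge) (use par in auto)
    have Sle: "sum_mset (image_mset (Im l a) \<zeta>) \<le> a * real (size \<zeta>)" by (rule Im_sum_bounds(2)[OF par sz])
    have "0 < a * real (size \<zeta>)" using par k1 by simp
    then have Qpos: "0 < Qf l a \<zeta>" using Qge by linarith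
    have tQ: "t\<^sup>2 = Qf l a \<zeta>" using Qpos by (simp add: tdef a_norm_Qf)
    have t0: "0 < t" using Qpos by (simp add: tdef a_norm_Qf)
    have C0: "0 \<le> Qf l a \<zeta> - 2 * sum_mset (image_mset (Im l a) \<zeta>) + a + t\<^sup>2"
      using Qge Sle tQ par by linarith
    have "step_exp l r lam G (a_norm l a) \<zeta> \<le> ennreal ((Qf l a \<zeta> - 2 * sum_mset (image_mset (Im l a) \<zeta>) + a + t\<^sup>2) / (2 * t)
          + (sum_mset (image_mset (Im l a) \<zeta>) / t) * M1 + a / (2 * t) * M2)"
      using step_bound[OF par G lam0 sz t0 C0] by (simp add: M1_def M2_def s1_def s2_def)
    also have "(Qf l a \<zeta> - 2 * sum_mset (image_mset (Im l a) \<zeta>) + a + t\<^sup>2) / (2 * t)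
          + (sum_mset (image_mset (Im l a) \<zeta>) / t) * M1 + a / (2 * t) * M2
        = t + (K0 - 2 * (1 - M1) * sum_mset (image_mset (Im l a) \<zeta>)) / (2 * t)"
      unfolding K0_def using fin_eq[OF t0, of "sum_mset (image_mset (Im l a) \<zeta>)" a M1 M2] tQ by simp
    finally show ?thesis .
  qed
  have part1: "step_exp l r lam G (a_norm l a) \<zeta> + ennreal \<alpha> \<le> ennreal (a_norm l a \<zeta>)"
    if z: "\<zeta> \<in> count_meas l" and big: "size \<zeta> > n0" for \<zeta>
  proof -
    define t where "t = a_norm l a \<zeta>"
    define S where "S = sum_mset (image_mset (Im l a) \<zeta>)"
    define k where "k = real (size \<zeta>)"
    have k1: "1 \<le> size \<zeta>" using big by simp
    have sz: "set_mset \<zeta> \<subseteq> {0..<l}" by (rule sub[OF z])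
    have Qge: "a * k \<le> Qf l a \<zeta>" unfolding k_def by (rule Qf_ge) (use par in auto)
    have Qle: "Qf l a \<zeta> \<le> a * k\<^sup>2"
      using Bf_le[OF sz sz par(2)] by (simp add: Qf_def k_def power2_eq_square mult.assoc)
    have "0 < a * k" using par k1 by (simp add: k_def)
    then have t0: "0 < t" using Qge by (simp add: t_def a_norm_Qf)
    have tle: "t \<le> sqrt a * k"
    proof -
      have "t = sqrt (Qf l a \<zeta>)" by (simp add: t_def a_norm_Qf)
      also have "\<dots> \<le> sqrt (a * k\<^sup>2)" using Qle by simp
      also have "\<dots> = sqrt a * k" using par by (simp add: real_sqrt_mult k_def)
      finally show ?thesis .
    qed
    have Sge: "c * k \<le> S" unfolding c_def S_def k_def by (rule Im_sum_bounds(1)[OF par sz])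
    have Kk: "K0 \<le> (1 - M1) * c * k"
    proof -
      have "real n0 \<le> k" using big by (simp add: k_def)
      then have "(1 - M1) * c * real n0 \<le> (1 - M1) * c * k" using M10 c0 by (intro mult_left_mono) auto
      then show ?thesis using n0 by simp
    qed
    have "step_exp l r lam G (a_norm l a) \<zeta> \<le> ennreal (t + (K0 - 2 * (1 - M1) * S) / (2 * t))"
      using key[OF z k1 t_def] by (simp add: S_def)
    then have "step_exp l r lam G (a_norm l a) \<zeta> + ennreal \<alpha> \<le> ennreal (t + (K0 - 2 * (1 - M1) * S) / (2 * t)) + ennreal \<alpha>"
      by (rule add_right_mono)
    also have "\<dots> = ennreal (t + (K0 - 2 * (1 - M1) * S) / (2 * t) + \<alpha>)"
    proof (rule ennreal_plus[symmetric])
      show "0 \<le> \<alpha>" using \<alpha>0 by simp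
      have "t + (K0 - 2 * (1 - M1) * S) / (2 * t) + \<alpha> \<le> t"
        unfolding \<alpha>_def by (rule fin1[OF t0 tle Sge M10(2) c0 par(2) _ Kk]) (use k1 in \<open>simp add: k_def\<close>)
      moreover have "t + (K0 - 2 * (1 - M1) * S) / (2 * t) \<ge> 0"
      proof -
        have "2 * (1 - M1) * S \<le> 2 * S" using M10 Im_sum_nonneg[OF par sz] by (simp add: S_def mult_right_mono)
        moreover have "S \<le> a * k" unfolding S_def k_def by (rule Im_sum_bounds(2)[OF par sz])
        moreover have "t\<^sup>2 = Qf l a \<zeta>" using Qf_nonneg[of l a \<zeta>] by (simp add: t_def a_norm_Qf)
        ultimately have "0 \<le> 2 * t\<^sup>2 + K0 - 2 * (1 - M1) * S" using Qge K00 by linarith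
        then have "0 \<le> (2 * t\<^sup>2 + K0 - 2 * (1 - M1) * S) / (2 * t)" using t0 by simp
        also have "(2 * t\<^sup>2 + K0 - 2 * (1 - M1) * S) / (2 * t) = t + (K0 - 2 * (1 - M1) * S) / (2 * t)"
          using t0 by (simp add: field_simps power2_eq_square)
        finally show ?thesis by simp
      qed
      ultimately show "0 \<le> t + (K0 - 2 * (1 - M1) * S) / (2 * t)" by simp
    qed
    also have "\<dots> \<le> ennreal t"
    proof (rule ennreal_leI)
      show "t + (K0 - 2 * (1 - M1) * S) / (2 * t) + \<alpha> \<le> t"
        unfolding \<alpha>_def by (rule fin1[OF t0 tle Sge M10(2) c0 par(2) _ Kk]) (use k1 in \<open>simp add: k_def\<close>)
    qed
    finally show ?thesis by (simp add: t_def)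
  qed
  have part2: "step_exp l r lam G (a_norm l a) \<zeta> \<le> ennreal (a_norm l a \<zeta> + b)"
    if z: "\<zeta> \<in> count_meas l" for \<zeta>
  proof (cases "size \<zeta> = 0")
    case True
    then have e: "\<zeta> = {#}" by simp
    have C0: "0 \<le> Qf l a \<zeta> - 2 * sum_mset (image_mset (Im l a) \<zeta>) + a + 1\<^sup>2"
      using par by (simp add: e Qf_def Bf_def)
    have "step_exp l r lam G (a_norm l a) \<zeta> \<le> ennreal ((Qf l a \<zeta> - 2 * sum_mset (image_mset (Im l a) \<zeta>) + a + 1\<^sup>2) / (2 * 1)
          + (sum_mset (image_mset (Im l a) \<zeta>) / 1) * M1 + a / (2 * 1) * M2)"
      using step_bound[OF par G lam0 sub[OF z] _ C0] by (simp add: M1_def M2_def s1_def s2_def)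
    also have "\<dots> = ennreal ((a + 1) / 2 + a / 2 * M2)" by (simp add: e Qf_def Bf_def)
    also have "\<dots> \<le> ennreal (a_norm l a \<zeta> + b)"
    proof (rule ennreal_leI)
      have "0 \<le> a_norm l a \<zeta>" by (simp add: a_norm_Qf Qf_nonneg)
      moreover have "0 \<le> K0 / (2 * sqrt a)" using K00 par by simp
      moreover have "(a + 1) / 2 + a / 2 * M2 = (1 + a + a * M2) / 2" by (simp add: field_simps)
      ultimately show "(a + 1) / 2 + a / 2 * M2 \<le> a_norm l a \<zeta> + b" unfolding b_def by linarith
    qed
    finally show ?thesis .
  next
    case False
    then have k1: "1 \<le> size \<zeta>" by linarith
    define t where "t = a_norm l a \<zeta>"
    define S where "S = sum_mset (image_mset (Im l a) \<zeta>)"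
    have sz: "set_mset \<zeta> \<subseteq> {0..<l}" by (rule sub[OF z])
    have Qge: "a * real (size \<zeta>) \<le> Qf l a \<zeta>" by (rule Qf_ge) (use par in auto)
    have ta: "sqrt a \<le> t"
    proof -
      have "a \<le> a * real (size \<zeta>)" using k1 par by simp
      then have "a \<le> Qf l a \<zeta>" using Qge by linarith
      then show ?thesis by (simp add: t_def a_norm_Qf)
    qed
    have sa: "0 < sqrt a" using par by simp
    have t0: "0 < t" using ta sa by linarith
    have S0: "0 \<le> S" unfolding S_def by (rule Im_sum_nonneg[OF par sz])
    have "step_exp l r lam G (a_norm l a) \<zeta> \<le> ennreal (t + (K0 - 2 * (1 - M1) * S) / (2 * t))"
      using key[OF z k1 t_def] by (simp add: S_def)
    also have "\<dots> \<le> ennreal (a_norm l a \<zeta> + b)"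
    proof (rule ennreal_leI)
      have "(K0 - 2 * (1 - M1) * S) / (2 * t) \<le> K0 / (2 * t)"
        using M10 S0 t0 by (intro divide_right_mono) auto
      also have "\<dots> \<le> K0 / (2 * sqrt a)" using K00 ta sa t0 by (intro divide_left_mono) auto
      also have "\<dots> \<le> b" using par M20 by (simp add: b_def)
      finally show "t + (K0 - 2 * (1 - M1) * S) / (2 * t) \<le> a_norm l a \<zeta> + b" by (simp add: t_def)
    qed
    finally show ?thesis .
  qed
  show ?thesis
    using \<alpha>0 b0 part1 part2 by blast
qed

end
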